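(* Let $k\ge2$, $n\ge1$ be integers and let $\rho:[0,\infty)\to(0,\infty)$ be a non-increasing function with $\int_{\mathbb{R}}\rho^{1/k}(t^2)\,dt<\infty$. Let $f_1,\dots,f_k:\mathbb{R}^n\to[0,\infty)$ be measurable, unconditional, integrable functions satisfying $$\prod_{i=1}^kf_i(x_i)\le\rho\Bigl(\sum_{1\le i<j\le k}\langle x_i,x_j\rangle\Bigr)\quad\text{for all }x_1,\dots,x_k\in\mathbb{R}^n_+ .$$ Then $$\prod_{i=1}^k\int_{\mathbb{R}^n}f_i(x_i)\,dx_i\le\Bigl(\int_{\mathbb{R}^n}\rho^{1/k}\Bigl(\frac{k(k-1)}{2}|u|^2\Bigr)du\Bigr)^k .$$ In particular, if $\alpha\ge0$ and $\prod_{i=1}^kf_i(x_i)\le e^{-\alpha\sum_{1\le i<j\le k}\langle x_i,x_j\rangle}$ for all $x_1,\dots,x_k\in\mathbb{R}^n_+$, then $$\prod_{i=1}^k\int_{\mathbb{R}^n}f_i(x_i)\,dx_i\le\Bigl(\int_{\mathbb{R}^n}e^{-\alpha\frac{k-1}{2}|u|^2}du\Bigr)^k$$ (the right-hand side being $+\infty$ if $\alpha=0$).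
   Context: A function $f:\mathbb{R}^n\to\mathbb{R}$ is unconditional if $f(\varepsilon_1x_1,\dots,\varepsilon_nx_n)=f(x_1,\dots,x_n)$ for all $(\varepsilon_1,\dots,\varepsilon_n)\in\{-1,1\}^n$ and all $(x_1,\dots,x_n)\in\mathbb{R}^n$. $\mathbb{R}^n_+=[0,\infty)^n$ is the nonnegative orthant, $|\cdot|$ the Euclidean norm and $\langle\cdot,\cdot\rangle$ the standard inner product. *)

theory Defs
  imports "HOL-Analysis.Analysis"
begin

definition unconditional :: "(real ^ 'n \<Rightarrow> real) \<Rightarrow> bool" where
  "unconditional f \<longleftrightarrow>
     (\<forall>\<epsilon> :: 'n \<Rightarrow> real. \<forall>x :: real ^ 'n. (\<forall>j. \<epsilon> j \<in> {-1, 1}) \<longrightarrow>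
        f (\<chi> j. \<epsilon> j * x $ j) = f x)"

definition nonneg_orthant :: "(real ^ 'n) set" where
  "nonneg_orthant = {x. \<forall>j. 0 \<le> x $ j}"

text \<open>Sum over 1 <= i < j <= k of inner products (indices 0..k-1 here).\<close>
definition pair_inner_sum :: "nat \<Rightarrow> (nat \<Rightarrow> real ^ 'n) \<Rightarrow> real" where
  "pair_inner_sum k x = (\<Sum>j<k. \<Sum>i<j. x i \<bullet> x j)"

end

theory Submission
  imports Defs "HOL-Analysis.Analysis"
begin

lemma emeasure_lborel_translate:
  fixes A :: "real set" assumes A: "A \<in> sets borel"
  shows "emeasure lborel ((\<lambda>x. x + c) ` A) = emeasure lborel A"
proof -
  have eq: "(\<lambda>x. x + c) ` A = (\<lambda>x. x - c) -` A"
    by (auto simp: image_iff) (metis diff_add_cancel)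
  have B: "(\<lambda>x. x + c) ` A \<in> sets borel"
  proof -
    have "(\<lambda>x::real. x - c) \<in> borel \<rightarrow>\<^sub>M borel" by measurable
    from measurable_sets_borel[OF this A] show ?thesis unfolding eq .
  qed
  have "emeasure lborel ((\<lambda>x. x + c) ` A) = emeasure (distr lborel borel ((+) c)) ((\<lambda>x. x + c) ` A)"
    by (simp add: lborel_distr_plus)
  also have "\<dots> = emeasure lborel ((+) c -` ((\<lambda>x. x + c) ` A))"
    using B by (simp add: emeasure_distr)
  also have "(+) c -` ((\<lambda>x. x + c) ` A) = A" by (auto simp: add.commute)
  finally show ?thesis .
qed

lemma bm2_compact:
  fixes K L :: "real set"
  assumes K: "compact K" "K \<noteq> {}" and L: "compact L" "L \<noteq> {}"
  shows "emeasure lborel K + emeasure lborel L \<le> emeasure lborel {x + y | x y. x \<in> K \<and> y \<in> L}"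
proof -
  define a where "a = Sup K"
  define b where "b = Inf L"
  have aK: "a \<in> K" unfolding a_def using K by (meson bounded_imp_bdd_above closed_contains_Sup compact_imp_bounded compact_imp_closed)
  have bL: "b \<in> L" unfolding b_def using L by (meson bounded_imp_bdd_below closed_contains_Inf compact_imp_bounded compact_imp_closed)
  have xa: "x \<le> a" if "x \<in> K" for x
    unfolding a_def using K that by (meson bounded_imp_bdd_above cSup_upper compact_imp_bounded)
  have yb: "b \<le> y" if "y \<in> L" for y
    unfolding b_def using L that by (meson bounded_imp_bdd_below cInf_lower compact_imp_bounded)
  define P where "P = (\<lambda>x. x + b) ` K"
  define Q where "Q = ((\<lambda>y. y + a) ` L) \<inter> {a + b <..}"
  have Kb[measurable]: "K \<in> sets borel" "L \<in> sets borel" using K L by (auto intro: borel_closed compact_imp_closed)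
  have Pb[measurable]: "P \<in> sets borel" unfolding P_def
    using K by (intro borel_closed compact_imp_closed compact_continuous_image) (auto intro!: continuous_intros)
  have Lab[measurable]: "(\<lambda>y. y + a) ` L \<in> sets borel"
    using L by (intro borel_closed compact_imp_closed compact_continuous_image) (auto intro!: continuous_intros)
  have Qb[measurable]: "Q \<in> sets borel" unfolding Q_def by measurable
  have S: "compact {x + y | x y. x \<in> K \<and> y \<in> L}" using K L by (intro compact_sums) auto
  have Sb[measurable]: "{x + y | x y. x \<in> K \<and> y \<in> L} \<in> sets borel"
    using S by (intro borel_closed compact_imp_closed)
  have e1: "emeasure lborel K = emeasure lborel P" unfolding P_def by (simp add: emeasure_lborel_translate)
  have e2: "emeasure lborel L \<le> emeasure lborel Q"
  proof -
    have "emeasure lborel L = emeasure lborel ((\<lambda>y. y + a) ` L)" by (simp add: emeasure_lborel_translate)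
    also have "\<dots> \<le> emeasure lborel (Q \<union> {a + b})"
    proof (intro emeasure_mono subsetI)
      fix z assume "z \<in> (\<lambda>y. y + a) ` L"
      then obtain y where y: "y \<in> L" "z = y + a" by auto
      from y(1) have "b \<le> y" by (rule yb)
      then show "z \<in> Q \<union> {a + b}" using y by (cases "y = b") (auto simp: Q_def)
    qed auto
    also have "\<dots> \<le> emeasure lborel Q + emeasure lborel {a + b}"
      by (intro emeasure_subadditive) auto
    finally show ?thesis by simp
  qed
  have e3: "emeasure lborel (P \<union> Q) = emeasure lborel P + emeasure lborel Q"
  proof (intro plus_emeasure[symmetric])
    show "P \<inter> Q = {}"
    proof (safe)
      fix z assume "z \<in> P" "z \<in> Q"
      then obtain x y where "x \<in> K" "z = x + b" "z = y + a" "a + b < z" by (auto simp: P_def Q_def)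
      with xa[OF \<open>x \<in> K\<close>] show "z \<in> {}" by simp
    qed
  qed (use Pb Qb in auto)
  have e4: "emeasure lborel (P \<union> Q) \<le> emeasure lborel {x + y | x y. x \<in> K \<and> y \<in> L}"
  proof (intro emeasure_mono subsetI)
    fix z assume "z \<in> P \<union> Q"
    then show "z \<in> {x + y | x y. x \<in> K \<and> y \<in> L}"
    proof
      assume "z \<in> P" then show ?thesis using bL by (auto simp: P_def)
    next
      assume "z \<in> Q" then obtain y where "y \<in> L" "z = a + y" by (auto simp: Q_def add.commute)
      then show ?thesis using aK by auto
    qed
  qed (use Sb in simp)
  have "emeasure lborel K + emeasure lborel L \<le> emeasure lborel P + emeasure lborel Q"
    using e1 e2 by (simp add: add_left_mono)
  also have "\<dots> \<le> emeasure lborel {x + y | x y. x \<in> K \<and> y \<in> L}" using e3 e4 by simp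
  finally show ?thesis .
qed

definition sumset :: "nat \<Rightarrow> (nat \<Rightarrow> real set) \<Rightarrow> real set" where
  "sumset k K = {(\<Sum>i<k. t i) | t. \<forall>i<k. t i \<in> K i}"

lemma sumset_0: "sumset 0 K = {0}" by (auto simp: sumset_def)

lemma sumset_Suc: "sumset (Suc k) K = {x + y | x y. x \<in> sumset k K \<and> y \<in> K k}"
proof safe
  fix z assume "z \<in> sumset (Suc k) K"
  then obtain t where t: "\<forall>i<Suc k. t i \<in> K i" "z = (\<Sum>i<Suc k. t i)" by (auto simp: sumset_def)
  then show "\<exists>x y. z = x + y \<and> x \<in> sumset k K \<and> y \<in> K k"
    by (intro exI[of _ "\<Sum>i<k. t i"] exI[of _ "t k"]) (auto simp: sumset_def)
next
  fix x y assume "x \<in> sumset k K" "y \<in> K k"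
  then obtain t where t: "\<forall>i<k. t i \<in> K i" "x = (\<Sum>i<k. t i)" by (auto simp: sumset_def)
  have "(\<Sum>i<k. (t(k := y)) i) = (\<Sum>i<k. t i)" by (intro sum.cong) auto
  then show "x + y \<in> sumset (Suc k) K" unfolding sumset_def
    using t \<open>y \<in> K k\<close> by (intro CollectI exI[of _ "t(k := y)"]) (auto simp: less_Suc_eq)
qed

lemma sumset_compact_ne:
  assumes "\<And>i. i < k \<Longrightarrow> compact (K i) \<and> K i \<noteq> {}"
  shows "compact (sumset k K) \<and> sumset k K \<noteq> {}"
  using assms
proof (induction k)
  case 0 then show ?case by (simp add: sumset_0)
next
  case (Suc k)
  then have IH: "compact (sumset k K)" "sumset k K \<noteq> {}" by auto
  have "compact (K k)" "K k \<noteq> {}" using Suc.prems by auto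
  with IH show ?case unfolding sumset_Suc by (auto intro!: compact_sums)
qed

lemma bm_compact:
  assumes "\<And>i. i < k \<Longrightarrow> compact (K i) \<and> K i \<noteq> {}"
  shows "(\<Sum>i<k. emeasure lborel (K i)) \<le> emeasure lborel (sumset k K)"
  using assms
proof (induction k)
  case 0 then show ?case by simp
next
  case (Suc k)
  have c: "compact (sumset k K) \<and> sumset k K \<noteq> {}" using Suc.prems by (intro sumset_compact_ne) auto
  have "(\<Sum>i<Suc k. emeasure lborel (K i)) = (\<Sum>i<k. emeasure lborel (K i)) + emeasure lborel (K k)" by simp
  also have "\<dots> \<le> emeasure lborel (sumset k K) + emeasure lborel (K k)"
    using Suc by (intro add_right_mono) auto
  also have "\<dots> \<le> emeasure lborel (sumset (Suc k) K)"
    unfolding sumset_Suc using c Suc.prems by (intro bm2_compact) auto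
  finally show ?case .
qed

lemma emeasure_lborel_scale_preimage:
  fixes C :: "real set" assumes C: "C \<in> sets borel" and k: "k > 0"
  shows "emeasure lborel ((\<lambda>x. x / k) -` C) = ennreal k * emeasure lborel C"
proof -
  have eq: "(\<lambda>x. x / k) -` C = ((*) (1/k)) -` C"
    by (rule arg_cong[where f="\<lambda>f. f -` C"]) (simp add: fun_eq_iff)
  have "emeasure lborel ((\<lambda>x. x / k) -` C) = emeasure (distr lborel borel ((*) (1/k))) C"
    using C unfolding eq by (simp add: emeasure_distr)
  also have "\<dots> = emeasure (density lborel (\<lambda>_. ennreal k)) C"
    using k by (simp add: lborel_distr_mult)
  also have "\<dots> = ennreal k * emeasure lborel C"
    using C by (simp add: emeasure_density nn_integral_cmult_indicator)
  finally show ?thesis .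
qed

lemma bm_measurable:
  assumes k: "k \<ge> 1"
    and A: "\<And>i. i < k \<Longrightarrow> A i \<in> sets borel \<and> A i \<noteq> {} \<and> bounded (A i)"
    and C: "C \<in> sets borel"
    and sub: "\<And>t. (\<forall>i<k. t i \<in> A i) \<Longrightarrow> (\<Sum>i<k. t i) / real k \<in> C"
  shows "(\<Sum>i<k. emeasure lborel (A i)) \<le> ennreal (real k) * emeasure lborel C"
proof (rule ennreal_le_epsilon)
  fix e :: real assume e: "0 < e"
  define e' where "e' = e / real k"
  have e': "e' > 0" using e k by (simp add: e'_def)
  have "\<forall>i<k. \<exists>T. closed T \<and> T \<subseteq> A i \<and> emeasure lebesgue (A i - T) < ennreal e'"
  proof safe
    fix i assume "i < k"
    then have "A i \<in> sets lebesgue" using A by auto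
    from sets_lebesgue_inner_closed[OF this e'] show "\<exists>T. closed T \<and> T \<subseteq> A i \<and> emeasure lebesgue (A i - T) < ennreal e'"
      by metis
  qed
  then obtain T where T: "\<And>i. i < k \<Longrightarrow> closed (T i) \<and> T i \<subseteq> A i \<and> emeasure lebesgue (A i - T i) < ennreal e'"
    by metis
  define a where "a i = (SOME x. x \<in> A i)" for i
  have a: "a i \<in> A i" if "i < k" for i using A[OF that] unfolding a_def by (simp add: some_in_eq)
  define K where "K i = T i \<union> {a i}" for i
  have Kc: "compact (K i) \<and> K i \<noteq> {}" if "i < k" for i
  proof -
    have "K i \<subseteq> A i" using T[OF that] a[OF that] unfolding K_def by auto
    then have "bounded (K i)" using A[OF that] bounded_subset by blast
    moreover have "closed (K i)" using T[OF that] unfolding K_def by auto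
    ultimately show ?thesis by (auto simp: compact_eq_bounded_closed K_def)
  qed
  have KA: "emeasure lborel (A i) \<le> emeasure lborel (K i) + ennreal e'" if "i < k" for i
  proof -
    have Tb: "T i \<in> sets borel" using T[OF that] by (auto intro: borel_closed)
    have Kb: "K i \<in> sets borel" using Tb by (simp add: K_def)
    have U: "K i \<union> (A i - T i) \<in> sets borel" using Kb Tb A[OF that] by auto
    have "A i \<subseteq> K i \<union> (A i - T i)" by (auto simp: K_def)
    then have "emeasure lborel (A i) \<le> emeasure lborel (K i \<union> (A i - T i))"
      using U by (intro emeasure_mono) auto
    also have "\<dots> \<le> emeasure lborel (K i) + emeasure lborel (A i - T i)"
      using A[OF that] Kb Tb by (intro emeasure_subadditive) auto
    also have "emeasure lborel (A i - T i) = emeasure lebesgue (A i - T i)"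
    proof -
      have "A i - T i \<in> sets lborel" using A[OF that] Tb by auto
      then show ?thesis
        by (simp add: emeasure_completion[OF sets_completionI_sets] main_part_sets)
    qed
    also have "emeasure lebesgue (A i - T i) \<le> ennreal e'"
      using T[OF that] by (simp add: less_imp_le)
    finally show ?thesis by (simp add: add_left_mono)
  qed
  have "(\<Sum>i<k. emeasure lborel (A i)) \<le> (\<Sum>i<k. emeasure lborel (K i) + ennreal e')"
    using KA by (intro sum_mono) auto
  also have "\<dots> = (\<Sum>i<k. emeasure lborel (K i)) + ennreal (real k * e')"
    using e' by (simp add: sum.distrib ennreal_mult'' ennreal_of_nat_eq_real_of_nat)
  also have "(\<Sum>i<k. emeasure lborel (K i)) \<le> emeasure lborel (sumset k K)"
    using Kc by (intro bm_compact) auto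
  also have "emeasure lborel (sumset k K) \<le> emeasure lborel ((\<lambda>x. x / real k) -` C)"
  proof (intro emeasure_mono)
    show "sumset k K \<subseteq> (\<lambda>x. x / real k) -` C"
    proof
      fix z assume "z \<in> sumset k K"
      then obtain t where t: "\<forall>i<k. t i \<in> K i" "z = (\<Sum>i<k. t i)" by (auto simp: sumset_def)
      have "\<forall>i<k. t i \<in> A i"
      proof safe
        fix i assume i: "i < k"
        with t(1) have "t i = a i \<or> t i \<in> T i" by (auto simp: K_def)
        then show "t i \<in> A i" using T[OF i] a[OF i] by auto
      qed
      from sub[OF this] show "z \<in> (\<lambda>x. x / real k) -` C" using t by simp
    qed
    have "(\<lambda>x::real. x / real k) \<in> borel \<rightarrow>\<^sub>M borel" by measurable
    from measurable_sets_borel[OF this C] show "(\<lambda>x. x / real k) -` C \<in> sets lborel" by simp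
  qed
  also have "\<dots> = ennreal (real k) * emeasure lborel C"
    using C k by (intro emeasure_lborel_scale_preimage) auto
  also have "real k * e' = e" using k by (simp add: e'_def)
  finally show "(\<Sum>i<k. emeasure lborel (A i)) \<le> ennreal (real k) * emeasure lborel C + ennreal e"
    by simp
qed

lemma ennreal_power_le_cancel:
  fixes x y :: ennreal
  assumes "x ^ k \<le> y ^ k" "k > 0"
  shows "x \<le> y"
proof (cases y)
  case (real r)
  show ?thesis
  proof (cases x)
    case (real s)
    have e1: "x ^ k = ennreal (s ^ k)" using real by (simp add: ennreal_power)
    have e2: "y ^ k = ennreal (r ^ k)" using \<open>y = ennreal r\<close> \<open>0 \<le> r\<close> by (simp add: ennreal_power)
    from assms(1) have "ennreal (s ^ k) \<le> ennreal (r ^ k)" unfolding e1 e2 .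
    then have "s ^ k \<le> r ^ k" using real \<open>0 \<le> r\<close> by (simp add: ennreal_le_iff)
    moreover obtain j where "k = Suc j" using \<open>k > 0\<close> gr0_conv_Suc by blast
    ultimately have "s \<le> r" using power_le_imp_le_base[of s j r] \<open>0 \<le> r\<close> by simp
    then show ?thesis using real \<open>y = ennreal r\<close> by simp
  next
    case top
    then have "x ^ k = top" using \<open>k > 0\<close> by (simp add: power_eq_top_ennreal)
    moreover have "y ^ k \<noteq> top" using \<open>y = ennreal r\<close> by (simp add: power_eq_top_ennreal)
    ultimately show ?thesis using assms(1) by (simp add: top_unique)
  qed
qed simp

lemma emeasure_lborel_Ioi_top: "emeasure lborel {0::real<..} = top"
proof -
  have "of_nat n \<le> emeasure lborel {0::real<..}" for n
  proof -
    have "of_nat n = emeasure lborel {0::real<..real n}" by (simp add: ennreal_of_nat_eq_real_of_nat)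
    also have "\<dots> \<le> emeasure lborel {0::real<..}" by (intro emeasure_mono) auto
    finally show ?thesis .
  qed
  then have "(SUP n. of_nat n :: ennreal) \<le> emeasure lborel {0::real<..}" by (intro SUP_least) auto
  then show ?thesis by (simp add: ennreal_SUP_of_nat_eq_top top_unique)
qed

lemma layer_inner:
  fixes v :: ennreal
  shows "(\<integral>\<^sup>+s. (if 0 < s \<and> ennreal s \<le> v then 1 else 0) \<partial>lborel) = v"
proof -
  have "(\<integral>\<^sup>+s. (if 0 < s \<and> ennreal s \<le> v then 1 else 0) \<partial>lborel) = (\<integral>\<^sup>+s. indicator {s. 0 < s \<and> ennreal s \<le> v} s \<partial>lborel)"
    by (intro nn_integral_cong) (auto simp: indicator_def)
  also have "\<dots> = emeasure lborel {s. 0 < s \<and> ennreal s \<le> v}"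
    by (intro nn_integral_indicator) measurable
  also have "\<dots> = v"
  proof (cases v)
    case (real r)
    then have "{s. 0 < s \<and> ennreal s \<le> v} = {0<..r}" by (auto simp: ennreal_le_iff)
    then show ?thesis using real by simp
  next
    case top
    then have "{s. 0 < s \<and> ennreal s \<le> v} = {0<..}" by auto
    then show ?thesis using top by (simp add: emeasure_lborel_Ioi_top)
  qed
  finally show ?thesis .
qed

lemma level_emeasure_eq:
  fixes f :: "real \<Rightarrow> ennreal"
  assumes [measurable]: "f \<in> borel_measurable borel"
  shows "emeasure lborel {x. ennreal s \<le> f x} = (\<integral>\<^sup>+x. (if ennreal s \<le> f x then 1 else 0) \<partial>lborel)"
proof -
  have "emeasure lborel {x. ennreal s \<le> f x} = (\<integral>\<^sup>+x. indicator {x. ennreal s \<le> f x} x \<partial>lborel)"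
    by (intro nn_integral_indicator[symmetric]) measurable
  also have "\<dots> = (\<integral>\<^sup>+x. (if ennreal s \<le> f x then 1 else 0) \<partial>lborel)"
    by (intro nn_integral_cong) (auto simp: indicator_def)
  finally show ?thesis .
qed

lemma level_emeasure_measurable[measurable]:
  fixes f :: "real \<Rightarrow> ennreal"
  assumes [measurable]: "f \<in> borel_measurable borel"
  shows "(\<lambda>s. emeasure lborel {x. ennreal s \<le> f x}) \<in> borel_measurable borel"
  unfolding level_emeasure_eq[OF assms] by measurable

lemma layer_cake:
  fixes f :: "real \<Rightarrow> ennreal"
  assumes [measurable]: "f \<in> borel_measurable borel"
  shows "(\<integral>\<^sup>+x. f x \<partial>lborel) = (\<integral>\<^sup>+s. indicator {0<..} s * emeasure lborel {x. ennreal s \<le> f x} \<partial>lborel)"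
proof -
  have "(\<integral>\<^sup>+x. f x \<partial>lborel) = (\<integral>\<^sup>+x. (\<integral>\<^sup>+s. (if 0 < s \<and> ennreal s \<le> f x then 1 else 0) \<partial>lborel) \<partial>lborel)"
    by (simp add: layer_inner)
  also have "\<dots> = (\<integral>\<^sup>+s. (\<integral>\<^sup>+x. (if 0 < s \<and> ennreal s \<le> f x then 1 else 0) \<partial>lborel) \<partial>lborel)"
    by (rule lborel_pair.Fubini'[symmetric]) measurable
  also have "\<dots> = (\<integral>\<^sup>+s. indicator {0<..} s * emeasure lborel {x. ennreal s \<le> f x} \<partial>lborel)"
  proof (intro nn_integral_cong)
    fix s :: real
    show "(\<integral>\<^sup>+x. (if 0 < s \<and> ennreal s \<le> f x then 1 else 0) \<partial>lborel) = indicator {0<..} s * emeasure lborel {x. ennreal s \<le> f x}"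
      by (cases "0 < s") (simp_all add: level_emeasure_eq)
  qed
  finally show ?thesis .
qed

lemma layer_cake_scaled:
  fixes f :: "real \<Rightarrow> ennreal" and c :: real
  assumes [measurable]: "f \<in> borel_measurable borel" and c: "c > 0"
  shows "(\<integral>\<^sup>+x. f x \<partial>lborel) = ennreal c * (\<integral>\<^sup>+\<tau>. indicator {0<..} \<tau> * emeasure lborel {x. ennreal (c * \<tau>) \<le> f x} \<partial>lborel)"
proof -
  have "(\<integral>\<^sup>+x. f x \<partial>lborel) = (\<integral>\<^sup>+s. indicator {0<..} s * emeasure lborel {x. ennreal s \<le> f x} \<partial>lborel)"
    by (rule layer_cake) measurable
  also have "\<dots> = ennreal \<bar>c\<bar> * (\<integral>\<^sup>+\<tau>. indicator {0<..} (0 + c * \<tau>) * emeasure lborel {x. ennreal (0 + c * \<tau>) \<le> f x} \<partial>lborel)"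
    by (rule nn_integral_real_affine) (use c in auto)
  also have "\<dots> = ennreal c * (\<integral>\<^sup>+\<tau>. indicator {0<..} \<tau> * emeasure lborel {x. ennreal (c * \<tau>) \<le> f x} \<partial>lborel)"
    using c by (simp add: indicator_def zero_less_mult_iff)
  finally show ?thesis .
qed

lemma amgm_real:
  fixes b :: "nat \<Rightarrow> real"
  assumes k: "k \<ge> 1" and b: "\<And>i. i < k \<Longrightarrow> 0 \<le> b i"
  shows "real k ^ k * (\<Prod>i<k. b i) \<le> (\<Sum>i<k. b i) ^ k"
proof -
  define P where "P = (\<Prod>i<k. b i)"
  define S where "S = (\<Sum>i<k. b i)"
  have P0: "0 \<le> P" unfolding P_def using b by (intro prod_nonneg) auto
  have S0: "0 \<le> S" unfolding S_def using b by (intro sum_nonneg) auto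
  have kpos: "real k > 0" using k by simp
  have am: "(\<Sum>i<k. b i / real (card {..<k})) \<ge> (\<Prod>i<k. b i) powr (1 / real (card {..<k}))"
  proof (intro arith_geom_mean)
    have "0 \<in> {..<k}" using k by simp
    then show "{..<k} \<noteq> {}" by blast
  qed (use b in auto)
  then have am': "P powr (1 / real k) \<le> S / real k"
    by (simp add: P_def S_def sum_divide_distrib)
  show ?thesis
  proof (cases "P = 0")
    case True then show ?thesis using S0 by (simp add: P_def[symmetric] S_def[symmetric])
  next
    case False
    then have Ppos: "P > 0" using P0 by simp
    have "(P powr (1 / real k)) ^ k = P powr (real k * (1 / real k))"
      using Ppos by (simp add: powr_realpow[symmetric] powr_powr mult.commute)
    also have "\<dots> = P" using kpos P0 by simp
    finally have eq: "(P powr (1 / real k)) ^ k = P" .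
    have "P \<le> (S / real k) ^ k"
      using power_mono[OF am', of k] eq by simp
    then have "P \<le> S ^ k / real k ^ k" by (simp add: power_divide)
    then have "real k ^ k * P \<le> S ^ k" using kpos by (simp add: field_simps)
    then show ?thesis by (simp add: P_def S_def)
  qed
qed

lemma amgm_ennreal:
  fixes B :: "nat \<Rightarrow> ennreal"
  assumes k: "k \<ge> 1"
  shows "of_nat k ^ k * (\<Prod>i<k. B i) \<le> (\<Sum>i<k. B i) ^ k"
proof (cases "\<exists>i<k. B i = top")
  case True
  then obtain j where j: "j < k" "B j = top" by auto
  have "B j \<le> (\<Sum>i<k. B i)" by (rule member_le_sum) (use j in auto)
  then have "(\<Sum>i<k. B i) = top" using j by (simp add: top_unique)
  then have "(\<Sum>i<k. B i) ^ k = top" using k by (simp add: power_eq_top_ennreal)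
  then show ?thesis by simp
next
  case False
  define b where "b i = enn2real (B i)" for i
  have Bb: "B i = ennreal (b i)" if "i < k" for i using False that by (auto simp: b_def less_top)
  have b0: "0 \<le> b i" for i by (simp add: b_def)
  have "of_nat k ^ k * (\<Prod>i<k. B i) = ennreal (real k ^ k * (\<Prod>i<k. b i))"
    using b0 by (simp add: Bb prod_ennreal ennreal_mult ennreal_power ennreal_of_nat_eq_real_of_nat prod_nonneg)
  also have "\<dots> \<le> ennreal ((\<Sum>i<k. b i) ^ k)"
    using amgm_real[OF k] b0 by (intro ennreal_leI) auto
  also have "\<dots> = (\<Sum>i<k. B i) ^ k"
    using b0 by (simp add: Bb ennreal_power sum_nonneg)
  finally show ?thesis .
qed

lemma pl_log_core:
  fixes G :: "nat \<Rightarrow> real \<Rightarrow> ennreal" and H :: "real \<Rightarrow> ennreal" and N :: real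
  assumes k: "k \<ge> 1"
    and Gm: "\<And>i. i < k \<Longrightarrow> G i \<in> borel_measurable borel"
    and Hm[measurable]: "H \<in> borel_measurable borel"
    and Gb: "\<And>i t. i < k \<Longrightarrow> G i t \<le> ennreal N"
    and Gs: "\<And>i t. i < k \<Longrightarrow> N < \<bar>t\<bar> \<Longrightarrow> G i t = 0"
    and hyp: "\<And>t. (\<Prod>i<k. G i (t i)) \<le> H ((\<Sum>i<k. t i) / real k) ^ k"
  shows "(\<Prod>i<k. \<integral>\<^sup>+t. G i t \<partial>lborel) \<le> (\<integral>\<^sup>+t. H t \<partial>lborel) ^ k"
proof (cases "\<exists>i<k. (\<integral>\<^sup>+t. G i t \<partial>lborel) = 0")
  case True
  then have p0: "(\<Prod>i<k. \<integral>\<^sup>+t. G i t \<partial>lborel) = 0" by auto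
  show ?thesis unfolding p0 by simp
next
  case False
  then have Gpos: "\<And>i. i < k \<Longrightarrow> (\<integral>\<^sup>+t. G i t \<partial>lborel) \<noteq> 0" by auto
  define M where "M i = (SUP t. G i t)" for i
  have GM: "G i t \<le> M i" for i t unfolding M_def by (rule SUP_upper) simp
  have MN: "M i \<le> ennreal N" if "i < k" for i unfolding M_def using Gb[OF that] by (intro SUP_least) auto
  have M0: "M i \<noteq> 0" if i: "i < k" for i
  proof
    assume "M i = 0"
    then have "\<And>t. G i t = 0" using GM[of i] by (metis le_zero_eq)
    then have "(\<integral>\<^sup>+t. G i t \<partial>lborel) = 0" by simp
    with Gpos[OF i] show False by simp
  qed
  define m where "m i = enn2real (M i)" for i
  have Mm: "M i = ennreal (m i)" if "i < k" for i
    using MN[OF that] unfolding m_def by (cases "M i") (auto simp: top_unique)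
  have mpos: "m i > 0" if "i < k" for i
  proof -
    have "ennreal (m i) \<noteq> 0" using M0[OF that] Mm[OF that] by simp
    then show ?thesis by (simp add: ennreal_eq_0_iff not_le)
  qed
  define c where "c = root k (\<Prod>i<k. m i)"
  have prodpos: "(\<Prod>i<k. m i) > 0" using mpos by (intro prod_pos) auto
  have cpos: "c > 0" unfolding c_def using prodpos k by simp
  have ck: "c ^ k = (\<Prod>i<k. m i)" unfolding c_def using prodpos k by (simp add: real_root_pow_pos2)
  define A where "A i \<tau> = {t. ennreal (m i * \<tau>) \<le> G i t}" for i \<tau>
  define C where "C \<tau> = {t. ennreal (c * \<tau>) \<le> H t}" for \<tau>
  define B where "B i = (\<integral>\<^sup>+\<tau>. indicator {0<..} \<tau> * emeasure lborel (A i \<tau>) \<partial>lborel)" for i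
  define D where "D = (\<integral>\<^sup>+\<tau>. indicator {0<..} \<tau> * emeasure lborel (C \<tau>) \<partial>lborel)"
  have GB: "(\<integral>\<^sup>+t. G i t \<partial>lborel) = ennreal (m i) * B i" if i: "i < k" for i
    unfolding B_def A_def using Gm[OF i] mpos[OF i] by (intro layer_cake_scaled)
  have HD: "(\<integral>\<^sup>+t. H t \<partial>lborel) = ennreal c * D"
    unfolding D_def C_def using cpos by (intro layer_cake_scaled) auto
  have Bcut: "B i = (\<integral>\<^sup>+\<tau>. indicator {0<..<1} \<tau> * emeasure lborel (A i \<tau>) \<partial>lborel)" if i: "i < k" for i
    unfolding B_def
  proof (intro nn_integral_cong_AE eventually_mono[OF AE_lborel_singleton[of 1]])
    fix \<tau> :: real assume "\<tau> \<noteq> 1"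
    show "indicator {0<..} \<tau> * emeasure lborel (A i \<tau>) = indicator {0<..<1} \<tau> * emeasure lborel (A i \<tau>)"
    proof (cases "\<tau> > 1")
      case True
      have "A i \<tau> = {}"
      proof (safe)
        fix t assume "t \<in> A i \<tau>"
        then have "ennreal (m i * \<tau>) \<le> G i t" by (simp add: A_def)
        also have "\<dots> \<le> ennreal (m i)" using GM[of i t] Mm[OF i] by simp
        finally have "m i * \<tau> \<le> m i" using mpos[OF i] by (simp add: ennreal_le_iff)
        then show "t \<in> {}" using True mpos[OF i] by simp
      qed
      then show ?thesis by simp
    next
      case False
      then show ?thesis using \<open>\<tau> \<noteq> 1\<close> by (simp add: indicator_def)
    qed
  qed
  have key: "(\<Sum>i<k. emeasure lborel (A i \<tau>)) \<le> ennreal (real k) * emeasure lborel (C \<tau>)"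
    if tau: "0 < \<tau>" "\<tau> < 1" for \<tau>
  proof (rule bm_measurable[OF k])
    fix i assume i: "i < k"
    note Gm[OF i, measurable]
    show "A i \<tau> \<in> sets borel \<and> A i \<tau> \<noteq> {} \<and> bounded (A i \<tau>)"
    proof safe
      show "A i \<tau> \<in> sets borel" unfolding A_def by measurable
    next
      assume "A i \<tau> = {}"
      moreover have "ennreal (m i * \<tau>) < M i"
        using Mm[OF i] mpos[OF i] tau by (simp add: ennreal_less_iff)
      then obtain t where "ennreal (m i * \<tau>) < G i t" unfolding M_def by (auto simp: less_SUP_iff)
      then have "t \<in> A i \<tau>" by (simp add: A_def)
      ultimately show False by simp
    next
      have "A i \<tau> \<subseteq> {-N..N}"
      proof
        fix t assume t: "t \<in> A i \<tau>"
        show "t \<in> {-N..N}"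
        proof (rule ccontr)
          assume "t \<notin> {-N..N}"
          then have "N < \<bar>t\<bar>" by auto
          then have "G i t = 0" by (rule Gs[OF i])
          moreover have "0 < m i * \<tau>" using mpos[OF i] tau by simp
          ultimately show False using t by (auto simp: A_def ennreal_le_iff2)
        qed
      qed
      then show "bounded (A i \<tau>)" by (rule bounded_subset[OF bounded_closed_interval])
    qed
  next
    show "C \<tau> \<in> sets borel" unfolding C_def by measurable
  next
    fix t assume t: "\<forall>i<k. t i \<in> A i \<tau>"
    have "ennreal (c * \<tau>) ^ k = ennreal ((c * \<tau>) ^ k)" by (rule ennreal_power) (use cpos tau in simp)
    also have "(c * \<tau>) ^ k = (\<Prod>i<k. m i * \<tau>)" by (simp add: power_mult_distrib ck prod.distrib)
    also have "ennreal (\<Prod>i<k. m i * \<tau>) = (\<Prod>i<k. ennreal (m i * \<tau>))"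
      using mpos tau by (intro prod_ennreal[symmetric]) (simp add: less_imp_le)
    also have "\<dots> \<le> (\<Prod>i<k. G i (t i))"
      using t by (intro prod_mono_ennreal) (simp add: A_def)
    also have "\<dots> \<le> H ((\<Sum>i<k. t i) / real k) ^ k" by (rule hyp)
    finally have "ennreal (c * \<tau>) \<le> H ((\<Sum>i<k. t i) / real k)"
      by (rule ennreal_power_le_cancel[of _ k]) (use k in auto)
    then show "(\<Sum>i<k. t i) / real k \<in> C \<tau>" by (simp add: C_def)
  qed
  have Ameas[measurable]: "(\<lambda>\<tau>. emeasure lborel (A i \<tau>)) \<in> borel_measurable borel" if i: "i < k" for i
  proof -
    note Gm[OF i, measurable]
    have "(\<lambda>s. emeasure lborel {x. ennreal s \<le> G i x}) \<in> borel_measurable borel" by measurable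
    then have "(\<lambda>\<tau>. emeasure lborel {x. ennreal (m i * \<tau>) \<le> G i x}) \<in> borel_measurable borel"
      by (rule measurable_compose[rotated]) measurable
    then show ?thesis by (simp add: A_def)
  qed
  have Cmeas[measurable]: "(\<lambda>\<tau>. emeasure lborel (C \<tau>)) \<in> borel_measurable borel"
  proof -
    have "(\<lambda>s. emeasure lborel {x. ennreal s \<le> H x}) \<in> borel_measurable borel" by measurable
    then have "(\<lambda>\<tau>. emeasure lborel {x. ennreal (c * \<tau>) \<le> H x}) \<in> borel_measurable borel"
      by (rule measurable_compose[rotated]) measurable
    then show ?thesis by (simp add: C_def)
  qed
  have sumB: "(\<Sum>i<k. B i) \<le> of_nat k * D"
  proof -
    have "(\<Sum>i<k. B i) = (\<Sum>i<k. \<integral>\<^sup>+\<tau>. indicator {0<..<1} \<tau> * emeasure lborel (A i \<tau>) \<partial>lborel)"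
      using Bcut by simp
    also have "\<dots> = (\<integral>\<^sup>+\<tau>. (\<Sum>i<k. indicator {0<..<1} \<tau> * emeasure lborel (A i \<tau>)) \<partial>lborel)"
      by (intro nn_integral_sum[symmetric]) auto
    also have "\<dots> \<le> (\<integral>\<^sup>+\<tau>. of_nat k * (indicator {0<..} \<tau> * emeasure lborel (C \<tau>)) \<partial>lborel)"
    proof (intro nn_integral_mono)
      fix \<tau> :: real
      show "(\<Sum>i<k. indicator {0<..<1} \<tau> * emeasure lborel (A i \<tau>)) \<le> of_nat k * (indicator {0<..} \<tau> * emeasure lborel (C \<tau>))"
      proof (cases "0 < \<tau> \<and> \<tau> < 1")
        case True
        then have i1: "indicator {0<..<1} \<tau> = (1::ennreal)" "indicator {0<..} \<tau> = (1::ennreal)"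
          by (auto simp: indicator_def)
        have "(\<Sum>i<k. emeasure lborel (A i \<tau>)) \<le> ennreal (real k) * emeasure lborel (C \<tau>)"
          using True by (intro key) auto
        then show ?thesis by (simp add: i1 ennreal_of_nat_eq_real_of_nat)
      next
        case False
        then have "indicator {0<..<1} \<tau> = (0::ennreal)" by (auto simp: indicator_def)
        then show ?thesis by simp
      qed
    qed
    also have "\<dots> = of_nat k * D" unfolding D_def by (intro nn_integral_cmult) measurable
    finally show ?thesis .
  qed
  have "(\<Prod>i<k. \<integral>\<^sup>+t. G i t \<partial>lborel) = (\<Prod>i<k. ennreal (m i) * B i)"
    using GB by simp
  also have "\<dots> = ennreal (c ^ k) * (\<Prod>i<k. B i)"
  proof -
    have "(\<Prod>i<k. ennreal (m i)) = ennreal (\<Prod>i<k. m i)"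
      using mpos by (intro prod_ennreal) (simp add: less_imp_le)
    then show ?thesis by (simp add: prod.distrib ck)
  qed
  finally have lhs: "(\<Prod>i<k. \<integral>\<^sup>+t. G i t \<partial>lborel) = ennreal (c ^ k) * (\<Prod>i<k. B i)" .
  have "of_nat k ^ k * (\<Prod>i<k. B i) \<le> (\<Sum>i<k. B i) ^ k" by (rule amgm_ennreal[OF k])
  also have "\<dots> \<le> (of_nat k * D) ^ k" by (intro power_mono sumB) simp
  also have "\<dots> = of_nat k ^ k * D ^ k" by (simp add: power_mult_distrib)
  finally have "of_nat k ^ k * (\<Prod>i<k. B i) \<le> of_nat k ^ k * D ^ k" .
  note kk = this
  have kr: "(of_nat k :: ennreal) ^ k = ennreal (real k ^ k)"
  proof -
    have "ennreal (real k) ^ k = ennreal (real k ^ k)" by (rule ennreal_power) simp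
    then show ?thesis by (simp only: ennreal_of_nat_eq_real_of_nat)
  qed
  have kpos: "real k ^ k > 0" using k by simp
  have nz: "(of_nat k ^ k :: ennreal) \<noteq> 0" "(of_nat k ^ k :: ennreal) \<noteq> top"
    unfolding kr using kpos by (simp_all add: ennreal_eq_0_iff not_le)
  have BD: "(\<Prod>i<k. B i) \<le> D ^ k"
    using ennreal_mult_le_mult_iff[OF nz, THEN iffD1, OF kk] .
  have "(\<Prod>i<k. \<integral>\<^sup>+t. G i t \<partial>lborel) \<le> ennreal (c ^ k) * D ^ k"
    unfolding lhs by (intro mult_left_mono BD) simp
  also have "\<dots> = (\<integral>\<^sup>+t. H t \<partial>lborel) ^ k"
    unfolding HD by (simp only: power_mult_distrib ennreal_power[OF less_imp_le[OF cpos]])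
  finally show ?thesis .
qed

lemma lborel_eq_distr_ln:
  "lborel = distr (density lborel (\<lambda>y. ennreal (indicator {0<..} y / y))) borel ln"
proof (rule lborel_eqI)
  fix l u :: real
  assume "\<And>b. b \<in> Basis \<Longrightarrow> l \<bullet> b \<le> u \<bullet> b"
  then have lu: "l \<le> u" by simp
  have "emeasure (distr (density lborel (\<lambda>y. ennreal (indicator {0<..} y / y))) borel ln) (box l u)
      = (\<integral>\<^sup>+y. ennreal (indicator {0<..} y / y) * indicator (ln -` box l u) y \<partial>lborel)"
  proof -
    have lnm: "(ln::real\<Rightarrow>real) \<in> borel \<rightarrow>\<^sub>M borel" by measurable
    have bl: "box l u \<in> sets borel" by simp
    have s: "ln -` box l u \<in> sets lborel" using measurable_sets_borel[OF lnm bl] by simp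
    have "emeasure (distr (density lborel (\<lambda>y. ennreal (indicator {0<..} y / y))) borel ln) (box l u)
        = emeasure (density lborel (\<lambda>y. ennreal (indicator {0<..} y / y))) (ln -` box l u)"
      by (simp add: emeasure_distr)
    also have "\<dots> = (\<integral>\<^sup>+y. ennreal (indicator {0<..} y / y) * indicator (ln -` box l u) y \<partial>lborel)"
      by (rule emeasure_density[OF _ s]) measurable
    finally show ?thesis .
  qed
  also have "\<dots> = (\<integral>\<^sup>+y. ennreal (1 / y) * indicator {exp l .. exp u} y \<partial>lborel)"
  proof (rule nn_integral_cong_AE)
    have ae: "AE y in lborel. y \<noteq> exp l \<and> y \<noteq> exp u"
      using AE_lborel_singleton[of "exp l"] AE_lborel_singleton[of "exp u"] by eventually_elim auto
    show "AE y in lborel. ennreal (indicator {0<..} y / y) * indicator (ln -` box l u) y = ennreal (1 / y) * indicator {exp l .. exp u} y"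
      using ae
    proof eventually_elim
      fix y :: real assume y: "y \<noteq> exp l \<and> y \<noteq> exp u"
      show "ennreal (indicator {0<..} y / y) * indicator (ln -` box l u) y = ennreal (1 / y) * indicator {exp l .. exp u} y"
      proof (cases "0 < y")
        case True
        have i1: "l < ln y \<longleftrightarrow> exp l < y" using True
          by (subst ln_less_cancel_iff[symmetric]) auto
        have i2: "ln y < u \<longleftrightarrow> y < exp u" using True
          by (subst ln_less_cancel_iff[symmetric]) auto
        have "y \<in> ln -` box l u \<longleftrightarrow> y \<in> {exp l .. exp u}" using y i1 i2 by auto
        then show ?thesis using True by (simp add: indicator_def)
      next
        case False
        then have "y \<notin> {exp l .. exp u}" by (auto intro: order.strict_trans2[OF exp_gt_zero])
        then show ?thesis using False by (simp add: indicator_def)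
      qed
    qed
  qed
  also have "\<dots> = ennreal (ln (exp u) - ln (exp l))"
  proof (rule nn_integral_FTC_Icc)
    show "(\<lambda>y::real. 1 / y) \<in> borel_measurable borel" by measurable
    fix x assume x: "x \<in> {exp l .. exp u}"
    then have "0 < x" by (auto intro: order.strict_trans2[OF exp_gt_zero])
    then show "DERIV ln x :> 1 / x" by (rule DERIV_ln_divide)
    show "0 \<le> 1 / x" using \<open>0 < x\<close> by simp
  qed (use lu in simp)
  also have "\<dots> = (\<Prod>b\<in>Basis. (u - l) \<bullet> b)" by simp
  finally show "emeasure (distr (density lborel (\<lambda>y. ennreal (indicator {0<..} y / y))) borel ln) (box l u) = (\<Prod>b\<in>Basis. (u - l) \<bullet> b)" .
qed simp

lemma nn_integral_exp_subst:
  fixes F :: "real \<Rightarrow> ennreal" assumes [measurable]: "F \<in> borel_measurable borel"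
  shows "(\<integral>\<^sup>+y. F y * indicator {0<..} y \<partial>lborel) = (\<integral>\<^sup>+t. F (exp t) * ennreal (exp t) \<partial>lborel)"
proof -
  define \<nu> where "\<nu> = density lborel (\<lambda>y. ennreal (indicator {0<..} y / y))"
  define g where "g t = F (exp t) * ennreal (exp t)" for t
  have gm[measurable]: "g \<in> borel_measurable borel" unfolding g_def by measurable
  have "(\<integral>\<^sup>+t. g t \<partial>lborel) = (\<integral>\<^sup>+t. g t \<partial>(distr \<nu> borel ln))"
    unfolding \<nu>_def by (rule arg_cong[where f="\<lambda>M. integral\<^sup>N M g", OF lborel_eq_distr_ln])
  also have "\<dots> = (\<integral>\<^sup>+y. g (ln y) \<partial>\<nu>)"
    by (rule nn_integral_distr) (simp_all add: \<nu>_def)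
  also have "\<dots> = (\<integral>\<^sup>+y. ennreal (indicator {0<..} y / y) * g (ln y) \<partial>lborel)"
    unfolding \<nu>_def by (rule nn_integral_density) measurable
  also have "\<dots> = (\<integral>\<^sup>+y. F y * indicator {0<..} y \<partial>lborel)"
  proof (rule nn_integral_cong)
    fix y :: real
    show "ennreal (indicator {0<..} y / y) * g (ln y) = F y * indicator {0<..} y"
    proof (cases "0 < y")
      case True
      have "ennreal (1 / y) * (F y * ennreal y) = F y * (ennreal (1 / y) * ennreal y)"
        by (simp add: ac_simps)
      also have "ennreal (1 / y) * ennreal y = ennreal (1 / y * y)"
        by (rule ennreal_mult[symmetric]) (use True in auto)
      also have "1 / y * y = 1" using True by simp
      finally show ?thesis using True by (simp add: g_def indicator_def)
    next
      case False then show ?thesis by (simp add: indicator_def)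
    qed
  qed
  finally show ?thesis by (simp add: g_def)
qed

lemma SUP_mult_incseq_ennreal:
  fixes f g :: "nat \<Rightarrow> ennreal"
  assumes f: "incseq f" and g: "incseq g"
  shows "(SUP n. f n) * (SUP n. g n) = (SUP n. f n * g n)"
proof (rule antisym)
  show "(SUP n. f n) * (SUP n. g n) \<le> (SUP n. f n * g n)"
    unfolding SUP_mult_right_ennreal
  proof (rule SUP_least)
    fix n
    show "f n * (SUP n. g n) \<le> (SUP n. f n * g n)"
      unfolding SUP_mult_left_ennreal
    proof (rule SUP_least)
      fix m
      have "f n * g m \<le> f (max n m) * g (max n m)"
        using f g by (intro mult_mono) (auto simp: incseq_def)
      also have "\<dots> \<le> (SUP n. f n * g n)" by (rule SUP_upper) simp
      finally show "f n * g m \<le> (SUP n. f n * g n)" .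
    qed
  qed
  show "(SUP n. f n * g n) \<le> (SUP n. f n) * (SUP n. g n)"
    by (rule SUP_least) (intro mult_mono SUP_upper; simp)
qed

lemma prod_SUP_incseq_ennreal:
  fixes a :: "'i \<Rightarrow> nat \<Rightarrow> ennreal"
  assumes "finite I" "\<And>i. i \<in> I \<Longrightarrow> incseq (a i)"
  shows "(\<Prod>i\<in>I. SUP n. a i n) = (SUP n. \<Prod>i\<in>I. a i n)"
  using assms
proof (induction I rule: finite_induct)
  case empty then show ?case by simp
next
  case (insert j I)
  have inc: "incseq (\<lambda>n. \<Prod>i\<in>I. a i n)"
    using insert.prems by (auto simp: incseq_def intro!: prod_mono_ennreal)
  have "(\<Prod>i\<in>insert j I. SUP n. a i n) = (SUP n. a j n) * (\<Prod>i\<in>I. SUP n. a i n)"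
    using insert by simp
  also have "\<dots> = (SUP n. a j n) * (SUP n. \<Prod>i\<in>I. a i n)" using insert by simp
  also have "\<dots> = (SUP n. a j n * (\<Prod>i\<in>I. a i n))"
    using insert.prems inc by (intro SUP_mult_incseq_ennreal) auto
  also have "\<dots> = (SUP n. \<Prod>i\<in>insert j I. a i n)" using insert by simp
  finally show ?case .
qed

lemma SUP_min_of_nat_ennreal: "(SUP m. min v (of_nat m :: ennreal)) = v"
proof (rule antisym)
  show "(SUP m. min v (of_nat m :: ennreal)) \<le> v" by (rule SUP_least) simp
  show "v \<le> (SUP m. min v (of_nat m :: ennreal))"
  proof (cases "v = top")
    case True
    have "(SUP m. of_nat m :: ennreal) \<le> (SUP m. min v (of_nat m :: ennreal))"
      using True by simp
    then show ?thesis using True by (simp add: ennreal_SUP_of_nat_eq_top)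
  next
    case False
    then obtain m where "v < of_nat m" using ennreal_Ex_less_of_nat less_top by blast
    then have "v = min v (of_nat m)" by simp
    also have "\<dots> \<le> (SUP m. min v (of_nat m :: ennreal))" by (rule SUP_upper) simp
    finally show ?thesis .
  qed
qed

lemma SUP_trunc_ennreal:
  fixes v :: ennreal and t :: real
  shows "(SUP n. min v (of_nat n) * indicator {- real n .. real n} t) = v"
proof (rule antisym)
  show "(SUP n. min v (of_nat n) * indicator {- real n .. real n} t) \<le> v"
    by (rule SUP_least) (auto simp: indicator_def)
  have "min v (of_nat m) \<le> (SUP n. min v (of_nat n) * indicator {- real n .. real n} t)" for m
  proof -
    define n where "n = max m (nat \<lceil>\<bar>t\<bar>\<rceil>)"
    have "\<bar>t\<bar> \<le> real n" unfolding n_def by linarith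
    then have ind: "indicator {- real n .. real n} t = (1::ennreal)" by (auto simp: indicator_def)
    have "min v (of_nat m) \<le> min v (of_nat n)" unfolding n_def by (intro min.mono) auto
    also have "\<dots> = min v (of_nat n) * indicator {- real n .. real n} t" by (simp add: ind)
    also have "\<dots> \<le> (SUP n. min v (of_nat n) * indicator {- real n .. real n} t)" by (rule SUP_upper) simp
    finally show ?thesis .
  qed
  then have "(SUP m. min v (of_nat m :: ennreal)) \<le> (SUP n. min v (of_nat n) * indicator {- real n .. real n} t)"
    by (intro SUP_least) auto
  then show "v \<le> (SUP n. min v (of_nat n) * indicator {- real n .. real n} t)"
    by (simp add: SUP_min_of_nat_ennreal)
qed

lemma root_prod_exp:
  assumes "k \<ge> 1"
  shows "root k (\<Prod>i<k. exp (t i)) = exp ((\<Sum>i<k. t i) / real k)"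
proof -
  have "(\<Prod>i<k. exp (t i)) = exp (\<Sum>i<k. t i)" by (simp add: exp_sum)
  moreover have "exp ((\<Sum>i<k. t i) / real k) ^ k = exp (\<Sum>i<k. t i)"
    using assms by (simp add: exp_of_nat_mult[symmetric])
  ultimately show ?thesis using assms by (intro real_root_pos_unique) auto
qed

lemma pl_mult_1d:
  fixes G :: "nat \<Rightarrow> real \<Rightarrow> ennreal" and H :: "real \<Rightarrow> ennreal"
  assumes k: "k \<ge> 1"
    and Gm: "\<And>i. i < k \<Longrightarrow> G i \<in> borel_measurable borel"
    and Hm[measurable]: "H \<in> borel_measurable borel"
    and hyp: "\<And>y. (\<forall>i<k. 0 < y i) \<Longrightarrow> (\<Prod>i<k. G i (y i)) \<le> H (root k (\<Prod>i<k. y i)) ^ k"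
  shows "(\<Prod>i<k. \<integral>\<^sup>+y. G i y * indicator {0..} y \<partial>lborel) \<le> (\<integral>\<^sup>+y. H y * indicator {0<..} y \<partial>lborel) ^ k"
proof -
  define Gt where "Gt i t = G i (exp t) * ennreal (exp t)" for i t
  define Ht where "Ht t = H (exp t) * ennreal (exp t)" for t
  have Gtm[measurable]: "Gt i \<in> borel_measurable borel" if "i < k" for i
    using Gm[OF that] unfolding Gt_def by measurable
  have Htm[measurable]: "Ht \<in> borel_measurable borel" unfolding Ht_def by measurable
  have e1: "(\<integral>\<^sup>+y. G i y * indicator {0..} y \<partial>lborel) = (\<integral>\<^sup>+t. Gt i t \<partial>lborel)" if i: "i < k" for i
  proof -
    note Gm[OF i, measurable]
    have "(\<integral>\<^sup>+y. G i y * indicator {0..} y \<partial>lborel) = (\<integral>\<^sup>+y. G i y * indicator {0<..} y \<partial>lborel)"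
      by (intro nn_integral_cong_AE eventually_mono[OF AE_lborel_singleton[of 0]]) (auto simp: indicator_def)
    also have "\<dots> = (\<integral>\<^sup>+t. Gt i t \<partial>lborel)" unfolding Gt_def by (rule nn_integral_exp_subst) measurable
    finally show ?thesis .
  qed
  have e2: "(\<integral>\<^sup>+y. H y * indicator {0<..} y \<partial>lborel) = (\<integral>\<^sup>+t. Ht t \<partial>lborel)"
    unfolding Ht_def by (rule nn_integral_exp_subst) measurable
  have hypt: "(\<Prod>i<k. Gt i (t i)) \<le> Ht ((\<Sum>i<k. t i) / real k) ^ k" for t
  proof -
    define s where "s = (\<Sum>i<k. t i) / real k"
    have es: "exp s ^ k = exp (\<Sum>i<k. t i)"
      using k by (simp add: s_def exp_of_nat_mult[symmetric])
    have pe: "(\<Prod>i<k. ennreal (exp (t i))) = ennreal (exp (\<Sum>i<k. t i))"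
      by (simp add: prod_ennreal exp_sum)
    have "(\<Prod>i<k. Gt i (t i)) = (\<Prod>i<k. G i (exp (t i))) * (\<Prod>i<k. ennreal (exp (t i)))"
      by (simp add: Gt_def prod.distrib)
    also have "\<dots> \<le> H (root k (\<Prod>i<k. exp (t i))) ^ k * (\<Prod>i<k. ennreal (exp (t i)))"
      by (intro mult_right_mono hyp) auto
    also have "root k (\<Prod>i<k. exp (t i)) = exp s" unfolding s_def by (rule root_prod_exp[OF k])
    also have "H (exp s) ^ k * (\<Prod>i<k. ennreal (exp (t i))) = H (exp s) ^ k * ennreal (exp s) ^ k"
    proof -
      have "ennreal (exp s) ^ k = ennreal (exp s ^ k)" by (rule ennreal_power) simp
      then show ?thesis using pe es by simp
    qed
    also have "\<dots> = Ht s ^ k" by (simp add: Ht_def power_mult_distrib)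
    finally show ?thesis by (simp add: s_def)
  qed
  define Gn where "Gn n i t = min (Gt i t) (of_nat n) * indicator {- real n .. real n} t" for n i t
  have Gnm[measurable]: "Gn n i \<in> borel_measurable borel" if "i < k" for n i
    using Gtm[OF that] unfolding Gn_def by measurable
  have bound: "(\<Prod>i<k. \<integral>\<^sup>+t. Gn n i t \<partial>lborel) \<le> (\<integral>\<^sup>+t. Ht t \<partial>lborel) ^ k" for n
  proof (rule pl_log_core[OF k, where N = "real n"])
    show "\<And>i. i < k \<Longrightarrow> Gn n i \<in> borel_measurable borel" by (rule Gnm)
    show "Ht \<in> borel_measurable borel" by (rule Htm)
    show "Gn n i t \<le> ennreal (real n)" if "i < k" for i t
    proof -
      have "Gn n i t \<le> min (Gt i t) (of_nat n)" by (auto simp: Gn_def indicator_def)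
      also have "\<dots> \<le> of_nat n" by simp
      finally show ?thesis by (simp add: ennreal_of_nat_eq_real_of_nat)
    qed
    show "Gn n i t = 0" if "i < k" "real n < \<bar>t\<bar>" for i t
      using that by (auto simp: Gn_def indicator_def)
    show "(\<Prod>i<k. Gn n i (t i)) \<le> Ht ((\<Sum>i<k. t i) / real k) ^ k" for t
    proof -
      have "(\<Prod>i<k. Gn n i (t i)) \<le> (\<Prod>i<k. Gt i (t i))"
        by (intro prod_mono_ennreal) (auto simp: Gn_def indicator_def)
      also have "\<dots> \<le> Ht ((\<Sum>i<k. t i) / real k) ^ k" by (rule hypt)
      finally show ?thesis .
    qed
  qed
  have incf: "incseq (\<lambda>n. Gn n i)" for i
  proof (rule incseq_SucI, rule le_funI)
    fix n t
    have "min (Gt i t) (of_nat n) \<le> min (Gt i t) (of_nat (Suc n))" by (intro min.mono) auto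
    moreover have "indicator {- real n .. real n} t \<le> (indicator {- real (Suc n) .. real (Suc n)} t :: ennreal)"
      by (auto simp: indicator_def)
    ultimately show "Gn n i t \<le> Gn (Suc n) i t" unfolding Gn_def by (intro mult_mono) auto
  qed
  have lim: "(\<integral>\<^sup>+t. Gt i t \<partial>lborel) = (SUP n. \<integral>\<^sup>+t. Gn n i t \<partial>lborel)" if i: "i < k" for i
  proof -
    have "(\<integral>\<^sup>+t. Gt i t \<partial>lborel) = (\<integral>\<^sup>+t. (SUP n. Gn n i t) \<partial>lborel)"
      by (simp add: Gn_def SUP_trunc_ennreal)
    also have "\<dots> = (SUP n. \<integral>\<^sup>+t. Gn n i t \<partial>lborel)"
      using incf[of i] Gnm[OF i] by (intro nn_integral_monotone_convergence_SUP) auto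
    finally show ?thesis .
  qed
  have incI: "incseq (\<lambda>n. \<integral>\<^sup>+t. Gn n i t \<partial>lborel)" for i
    using incf[of i] by (auto simp: incseq_def le_fun_def intro!: nn_integral_mono)
  have "(\<Prod>i<k. \<integral>\<^sup>+y. G i y * indicator {0..} y \<partial>lborel) = (\<Prod>i<k. SUP n. \<integral>\<^sup>+t. Gn n i t \<partial>lborel)"
    using e1 lim by simp
  also have "\<dots> = (SUP n. \<Prod>i<k. \<integral>\<^sup>+t. Gn n i t \<partial>lborel)"
    using incI by (intro prod_SUP_incseq_ennreal) auto
  also have "\<dots> \<le> (\<integral>\<^sup>+t. Ht t \<partial>lborel) ^ k" by (intro SUP_least bound)
  also have "\<dots> = (\<integral>\<^sup>+y. H y * indicator {0<..} y \<partial>lborel) ^ k" by (simp add: e2)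
  finally show ?thesis .
qed

definition nnind :: "'b set \<Rightarrow> ('b \<Rightarrow> real) \<Rightarrow> ennreal" where
  "nnind I y = (\<Prod>j\<in>I. indicator {0..} (y j))"

definition pind :: "'b set \<Rightarrow> ('b \<Rightarrow> real) \<Rightarrow> ennreal" where
  "pind I y = (\<Prod>j\<in>I. indicator {0<..} (y j))"

lemma nnind_measurable[measurable]: "finite I \<Longrightarrow> nnind I \<in> borel_measurable (PiM I (\<lambda>_. lborel))"
  unfolding nnind_def by measurable

lemma pind_measurable[measurable]: "finite I \<Longrightarrow> pind I \<in> borel_measurable (PiM I (\<lambda>_. lborel))"
  unfolding pind_def by measurable

lemma nnind_insert:
  assumes "finite I" "j \<notin> I"
  shows "nnind (insert j I) (x(j := y)) = indicator {0..} y * nnind I x"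
proof -
  have "(\<Prod>a\<in>I. indicator {0..} ((x(j := y)) a)) = (\<Prod>a\<in>I. (indicator {0..} (x a) :: ennreal))"
    by (rule prod.cong) (use assms in auto)
  then show ?thesis using assms unfolding nnind_def by (simp add: prod.insert)
qed

lemma pind_insert:
  assumes "finite I" "j \<notin> I"
  shows "pind (insert j I) (x(j := y)) = indicator {0<..} y * pind I x"
proof -
  have "(\<Prod>a\<in>I. indicator {0<..} ((x(j := y)) a)) = (\<Prod>a\<in>I. (indicator {0<..} (x a) :: ennreal))"
    by (rule prod.cong) (use assms in auto)
  then show ?thesis using assms unfolding pind_def by (simp add: prod.insert)
qed

lemma pl_PiM:
  fixes I :: "'b set" and k :: nat
  assumes I: "finite I" and k: "k \<ge> 1"
  shows "\<And>(g :: nat \<Rightarrow> ('b \<Rightarrow> real) \<Rightarrow> ennreal) h.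
    (\<And>i. i < k \<Longrightarrow> g i \<in> borel_measurable (PiM I (\<lambda>_. lborel))) \<Longrightarrow>
    h \<in> borel_measurable (PiM I (\<lambda>_. lborel)) \<Longrightarrow>
    (\<And>x. (\<And>i. i < k \<Longrightarrow> x i \<in> space (PiM I (\<lambda>_. lborel)) \<and> (\<forall>j\<in>I. 0 < x i j)) \<Longrightarrow>
        (\<Prod>i<k. g i (x i)) \<le> h (\<lambda>j\<in>I. root k (\<Prod>i<k. x i j)) ^ k) \<Longrightarrow>
    (\<Prod>i<k. \<integral>\<^sup>+y. g i y * nnind I y \<partial>PiM I (\<lambda>_. lborel))
      \<le> (\<integral>\<^sup>+y. h y * pind I y \<partial>PiM I (\<lambda>_. lborel)) ^ k"
  using I
proof (induction I rule: finite_induct)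
  case empty
  fix g :: "nat \<Rightarrow> ('b \<Rightarrow> real) \<Rightarrow> ennreal" and h
  assume hyp: "\<And>x. (\<And>i. i < k \<Longrightarrow> x i \<in> space (PiM {} (\<lambda>_. lborel)) \<and> (\<forall>j\<in>{}. 0 < x i j)) \<Longrightarrow>
        (\<Prod>i<k. g i (x i)) \<le> h (\<lambda>j\<in>{}. root k (\<Prod>i<k. x i j)) ^ k"
  define u :: "'b \<Rightarrow> real" where "u = (\<lambda>_. undefined)"
  have "(\<Prod>i<k. g i u) \<le> h (\<lambda>j\<in>{}. root k (\<Prod>i<k. (\<lambda>_. u) i j)) ^ k"
    by (rule hyp[of "\<lambda>_. u"]) (simp add: PiM_empty u_def)
  moreover have "(\<lambda>j\<in>{}. root k (\<Prod>i<k. (\<lambda>_. u) i j)) = u" by (simp add: u_def fun_eq_iff)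
  ultimately have "(\<Prod>i<k. g i u) \<le> h u ^ k" by simp
  then show "(\<Prod>i<k. \<integral>\<^sup>+y. g i y * nnind {} y \<partial>PiM {} (\<lambda>_. lborel))
      \<le> (\<integral>\<^sup>+y. h y * pind {} y \<partial>PiM {} (\<lambda>_. lborel)) ^ k"
    by (simp add: PiM_empty nnind_def pind_def u_def nn_integral_count_space_finite)
next
  case (insert j I)
  interpret product_sigma_finite "\<lambda>_. lborel :: real measure" by standard
  interpret PI: sigma_finite_measure "PiM I (\<lambda>_. lborel :: real measure)"
    using insert.hyps(1) by (simp add: sigma_finite)
  fix g :: "nat \<Rightarrow> ('b \<Rightarrow> real) \<Rightarrow> ennreal" and h
  assume gm: "\<And>i. i < k \<Longrightarrow> g i \<in> borel_measurable (PiM (insert j I) (\<lambda>_. lborel))"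
    and hm[measurable]: "h \<in> borel_measurable (PiM (insert j I) (\<lambda>_. lborel))"
    and hyp: "\<And>x. (\<And>i. i < k \<Longrightarrow> x i \<in> space (PiM (insert j I) (\<lambda>_. lborel)) \<and> (\<forall>l\<in>insert j I. 0 < x i l)) \<Longrightarrow>
        (\<Prod>i<k. g i (x i)) \<le> h (\<lambda>l\<in>insert j I. root k (\<Prod>i<k. x i l)) ^ k"
  note fin = insert.hyps(1) and jI = insert.hyps(2)
  define G where "G i y = (\<integral>\<^sup>+x. g i (x(j := y)) * nnind I x \<partial>PiM I (\<lambda>_. lborel))" for i y
  define H where "H y = (\<integral>\<^sup>+x. h (x(j := y)) * pind I x \<partial>PiM I (\<lambda>_. lborel))" for y
  have Gm: "G i \<in> borel_measurable borel" if i: "i < k" for i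
  proof -
    note gm[OF i, measurable] fin[measurable]
    show ?thesis unfolding G_def by measurable
  qed
  have Hm: "H \<in> borel_measurable borel"
  proof -
    note fin[measurable]
    show ?thesis unfolding H_def by measurable
  qed
  have eqG: "(\<integral>\<^sup>+y. g i y * nnind (insert j I) y \<partial>PiM (insert j I) (\<lambda>_. lborel))
      = (\<integral>\<^sup>+y. G i y * indicator {0..} y \<partial>lborel)" if i: "i < k" for i
  proof -
    note gm[OF i, measurable] fin[measurable]
    have "(\<integral>\<^sup>+y. g i y * nnind (insert j I) y \<partial>PiM (insert j I) (\<lambda>_. lborel))
        = (\<integral>\<^sup>+y. \<integral>\<^sup>+x. g i (x(j := y)) * nnind (insert j I) (x(j := y)) \<partial>PiM I (\<lambda>_. lborel) \<partial>lborel)"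
      by (rule product_nn_integral_insert_rev) (use fin jI in auto)
    also have "\<dots> = (\<integral>\<^sup>+y. \<integral>\<^sup>+x. (g i (x(j := y)) * nnind I x) * indicator {0..} y \<partial>PiM I (\<lambda>_. lborel) \<partial>lborel)"
      by (intro nn_integral_cong) (simp add: nnind_insert[OF fin jI] ac_simps)
    also have "\<dots> = (\<integral>\<^sup>+y. G i y * indicator {0..} y \<partial>lborel)"
      unfolding G_def by (intro nn_integral_cong nn_integral_multc) measurable
    finally show ?thesis .
  qed
  have eqH: "(\<integral>\<^sup>+y. h y * pind (insert j I) y \<partial>PiM (insert j I) (\<lambda>_. lborel))
      = (\<integral>\<^sup>+y. H y * indicator {0<..} y \<partial>lborel)"
  proof -
    note fin[measurable]
    have "(\<integral>\<^sup>+y. h y * pind (insert j I) y \<partial>PiM (insert j I) (\<lambda>_. lborel))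
        = (\<integral>\<^sup>+y. \<integral>\<^sup>+x. h (x(j := y)) * pind (insert j I) (x(j := y)) \<partial>PiM I (\<lambda>_. lborel) \<partial>lborel)"
      by (rule product_nn_integral_insert_rev) (use fin jI in auto)
    also have "\<dots> = (\<integral>\<^sup>+y. \<integral>\<^sup>+x. (h (x(j := y)) * pind I x) * indicator {0<..} y \<partial>PiM I (\<lambda>_. lborel) \<partial>lborel)"
      by (intro nn_integral_cong) (simp add: pind_insert[OF fin jI] ac_simps)
    also have "\<dots> = (\<integral>\<^sup>+y. H y * indicator {0<..} y \<partial>lborel)"
      unfolding H_def by (intro nn_integral_cong nn_integral_multc) measurable
    finally show ?thesis .
  qed
  have slice: "(\<Prod>i<k. G i (y i)) \<le> H (root k (\<Prod>i<k. y i)) ^ k" if y: "\<forall>i<k. 0 < y i" for y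
  proof -
    define g' where "g' i x = g i (x(j := y i))" for i x
    define h' where "h' x = h (x(j := root k (\<Prod>i<k. y i)))" for x
    have upd: "(\<lambda>x. x(j := v)) \<in> PiM I (\<lambda>_. lborel) \<rightarrow>\<^sub>M PiM (insert j I) (\<lambda>_. lborel :: real measure)" for v
    proof -
      have "(\<lambda>x. (x, v)) \<in> PiM I (\<lambda>_. lborel) \<rightarrow>\<^sub>M PiM I (\<lambda>_. lborel) \<Otimes>\<^sub>M (lborel :: real measure)"
        by measurable
      from measurable_comp[OF this measurable_add_dim[of j I "\<lambda>_. lborel"]]
      show ?thesis by (simp add: comp_def)
    qed
    have g'm: "g' i \<in> borel_measurable (PiM I (\<lambda>_. lborel))" if i: "i < k" for i
      unfolding g'_def using measurable_comp[OF upd gm[OF i]] by (simp add: comp_def)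
    have h'm: "h' \<in> borel_measurable (PiM I (\<lambda>_. lborel))"
      unfolding h'_def using measurable_comp[OF upd hm] by (simp add: comp_def)
    have "(\<Prod>i<k. \<integral>\<^sup>+x. g' i x * nnind I x \<partial>PiM I (\<lambda>_. lborel))
        \<le> (\<integral>\<^sup>+x. h' x * pind I x \<partial>PiM I (\<lambda>_. lborel)) ^ k"
    proof (rule insert.IH)
      show "\<And>i. i < k \<Longrightarrow> g' i \<in> borel_measurable (PiM I (\<lambda>_. lborel))" by (rule g'm)
      show "h' \<in> borel_measurable (PiM I (\<lambda>_. lborel))" by (rule h'm)
      fix x :: "nat \<Rightarrow> 'b \<Rightarrow> real"
      assume x: "\<And>i. i < k \<Longrightarrow> x i \<in> space (PiM I (\<lambda>_. lborel)) \<and> (\<forall>l\<in>I. 0 < x i l)"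
      have xs: "(x i)(j := y i) \<in> space (PiM (insert j I) (\<lambda>_. lborel)) \<and> (\<forall>l\<in>insert j I. 0 < ((x i)(j := y i)) l)"
        if i: "i < k" for i
        using x[OF i] y i jI by (auto simp: space_PiM PiE_def extensional_def)
      have "(\<Prod>i<k. g' i (x i)) \<le> h (\<lambda>l\<in>insert j I. root k (\<Prod>i<k. ((x i)(j := y i)) l)) ^ k"
        unfolding g'_def by (rule hyp[of "\<lambda>i. (x i)(j := y i)"]) (rule xs)
      also have "(\<lambda>l\<in>insert j I. root k (\<Prod>i<k. ((x i)(j := y i)) l))
          = (\<lambda>l\<in>I. root k (\<Prod>i<k. x i l))(j := root k (\<Prod>i<k. y i))"
        using jI by (auto simp: fun_eq_iff)
      finally show "(\<Prod>i<k. g' i (x i)) \<le> h' (\<lambda>l\<in>I. root k (\<Prod>i<k. x i l)) ^ k"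
        unfolding h'_def .
    qed
    then show ?thesis by (simp add: G_def H_def g'_def h'_def)
  qed
  have "(\<Prod>i<k. \<integral>\<^sup>+y. G i y * indicator {0..} y \<partial>lborel) \<le> (\<integral>\<^sup>+y. H y * indicator {0<..} y \<partial>lborel) ^ k"
    by (rule pl_mult_1d[OF k Gm Hm slice]) auto
  then show "(\<Prod>i<k. \<integral>\<^sup>+y. g i y * nnind (insert j I) y \<partial>PiM (insert j I) (\<lambda>_. lborel))
      \<le> (\<integral>\<^sup>+y. h y * pind (insert j I) y \<partial>PiM (insert j I) (\<lambda>_. lborel)) ^ k"
    using eqG eqH by simp
qed

lemma pair_prod_aux:
  fixes a :: "nat \<Rightarrow> real"
  shows "(\<Prod>j<k. \<Prod>i<j. a i * a j) * (\<Prod>i<k. a i) = (\<Prod>i<k. a i) ^ k"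
proof (induction k)
  case 0 then show ?case by simp
next
  case (Suc k)
  have e: "(\<Prod>i<k. a i * a k) = (\<Prod>i<k. a i) * a k ^ k" by (simp add: prod.distrib)
  have "(\<Prod>j<Suc k. \<Prod>i<j. a i * a j) * (\<Prod>i<Suc k. a i)
      = ((\<Prod>j<k. \<Prod>i<j. a i * a j) * (\<Prod>i<k. a i)) * ((\<Prod>i<k. a i) * a k ^ k * a k)"
    by (simp add: e ac_simps)
  also have "\<dots> = (\<Prod>i<k. a i) ^ k * ((\<Prod>i<k. a i) * a k ^ k * a k)" by (simp add: Suc.IH)
  also have "\<dots> = (\<Prod>i<Suc k. a i) ^ Suc k" by (simp add: power_mult_distrib ac_simps)
  finally show ?case .
qed

lemma sum_lessThan_real: "real (\<Sum>j<k. j) = real k * (real k - 1) / 2"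
  by (induction k) (simp_all add: field_simps)

lemma pair_amgm:
  fixes a :: "nat \<Rightarrow> real"
  assumes k: "k \<ge> 2" and a: "\<And>i. i < k \<Longrightarrow> 0 < a i"
  shows "real k * (real k - 1) / 2 * (root k (\<Prod>i<k. a i))\<^sup>2 \<le> (\<Sum>j<k. \<Sum>i<j. a i * a j)"
proof -
  define S where "S = Sigma {..<k} (\<lambda>j. {..<j})"
  define P where "P = (\<Prod>i<k. a i)"
  define c where "c = real k * (real k - 1) / 2"
  have Ppos: "P > 0" unfolding P_def using a by (intro prod_pos) auto
  have finS: "finite S" unfolding S_def by auto
  have cardS: "real (card S) = c" unfolding S_def c_def
    by (simp add: card_SigmaI sum_lessThan_real[symmetric])
  have cpos: "c > 0" using k by (simp add: c_def)
  have "(1, 0) \<in> S" using k unfolding S_def by auto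
  then have Sne: "S \<noteq> {}" by blast
  have am: "(\<Sum>p\<in>S. (a (snd p) * a (fst p)) / card S) \<ge> (\<Prod>p\<in>S. a (snd p) * a (fst p)) powr (1 / card S)"
    using finS Sne a by (intro arith_geom_mean) (auto simp: S_def less_imp_le intro!: mult_nonneg_nonneg)
  have sumS: "(\<Sum>p\<in>S. a (snd p) * a (fst p)) = (\<Sum>j<k. \<Sum>i<j. a i * a j)"
  proof -
    have "(\<Sum>j<k. \<Sum>i<j. a i * a j) = (\<Sum>(j,i)\<in>S. a i * a j)" unfolding S_def by (rule sum.Sigma) auto
    then show ?thesis by (simp add: split_def)
  qed
  have prodS: "(\<Prod>p\<in>S. a (snd p) * a (fst p)) = P ^ (k - 1)"
  proof -
    have "(\<Prod>p\<in>S. a (snd p) * a (fst p)) = (\<Prod>j<k. \<Prod>i<j. a i * a j)"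
    proof -
      have "(\<Prod>j<k. \<Prod>i<j. a i * a j) = (\<Prod>(j,i)\<in>S. a i * a j)" unfolding S_def by (rule prod.Sigma) auto
      then show ?thesis by (simp add: split_def)
    qed
    moreover have "(\<Prod>j<k. \<Prod>i<j. a i * a j) * P = P ^ k" unfolding P_def by (rule pair_prod_aux)
    moreover have "P ^ k = P ^ (k - 1) * P" using k by (cases k) auto
    ultimately show ?thesis using Ppos by simp
  qed
  have "(\<Sum>j<k. \<Sum>i<j. a i * a j) / c \<ge> (P ^ (k - 1)) powr (1 / c)"
    using am unfolding sum_divide_distrib[symmetric] sumS prodS cardS .
  also have "(P ^ (k - 1)) powr (1 / c) = P powr (real (k - 1) * (1 / c))"
  proof -
    have "P ^ (k - 1) = P powr real (k - 1)" by (rule powr_realpow[symmetric]) (use Ppos in simp)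
    then show ?thesis by (simp only: powr_powr)
  qed
  also have "real (k - 1) * (1 / c) = 2 / real k"
    using k by (simp add: c_def of_nat_diff field_simps)
  also have "P powr (2 / real k) = (root k P)\<^sup>2"
  proof -
    have r: "root k P = P powr (1 / real k)" using k Ppos by (intro root_powr_inverse) auto
    have "(P powr (1 / real k)) ^ 2 = P powr (of_nat 2 * (1 / real k))"
      by (rule powr_power) (use Ppos in simp)
    then show ?thesis using r by simp
  qed
  finally have le: "(root k P)\<^sup>2 \<le> (\<Sum>j<k. \<Sum>i<j. a i * a j) / c" .
  have "(root k P)\<^sup>2 * c \<le> (\<Sum>j<k. \<Sum>i<j. a i * a j)"
    using le cpos by (simp only: pos_le_divide_eq)
  then have "c * (root k P)\<^sup>2 \<le> (\<Sum>j<k. \<Sum>i<j. a i * a j)" by (simp only: mult.commute)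
  then show ?thesis unfolding c_def P_def .
qed

definition refl_map :: "('a::euclidean_space \<Rightarrow> real) \<Rightarrow> 'a \<Rightarrow> 'a" where
  "refl_map \<sigma> x = (\<Sum>b\<in>Basis. (\<sigma> b * (x \<bullet> b)) *\<^sub>R b)"

abbreviation signs :: "('a::euclidean_space \<Rightarrow> real) set" where
  "signs \<equiv> PiE Basis (\<lambda>_. {-1, 1})"

lemma refl_map_inner: "b \<in> Basis \<Longrightarrow> refl_map \<sigma> x \<bullet> b = \<sigma> b * (x \<bullet> b)"
  unfolding refl_map_def by (simp add: inner_sum_left inner_Basis if_distrib cong: if_cong)

lemma refl_map_borel[measurable]: "refl_map \<sigma> \<in> borel_measurable borel"
  unfolding refl_map_def by measurable

lemma refl_map_lebesgue: "refl_map \<sigma> \<in> borel_measurable lebesgue"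
  by (rule measurable_completion) simp

lemma reflect_nn_integral:
  fixes F :: "'a::euclidean_space \<Rightarrow> ennreal"
  assumes \<sigma>: "\<sigma> \<in> signs" and F: "F \<in> borel_measurable lebesgue"
  shows "(\<integral>\<^sup>+x. F (refl_map \<sigma> x) \<partial>lebesgue) = (\<integral>\<^sup>+x. F x \<partial>lebesgue)"
proof -
  have c: "\<And>j. j \<in> Basis \<Longrightarrow> \<sigma> j \<noteq> 0" using \<sigma> by (auto simp: PiE_def Pi_def)
  have abs1: "(\<Prod>j\<in>Basis. \<bar>\<sigma> j\<bar>) = 1" using \<sigma> by (intro prod.neutral) (auto simp: PiE_def Pi_def)
  have T: "(\<lambda>x. 0 + (\<Sum>j\<in>Basis. (\<sigma> j * (x \<bullet> j)) *\<^sub>R j)) = refl_map \<sigma>"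
    by (simp add: refl_map_def fun_eq_iff)
  have leb: "lebesgue = density (distr lebesgue lebesgue (refl_map \<sigma>)) (\<lambda>_. 1)"
    using lebesgue_affine_euclidean[of \<sigma> 0, OF c] unfolding T abs1 by simp
  have Tm: "refl_map \<sigma> \<in> lebesgue \<rightarrow>\<^sub>M lebesgue"
    using lebesgue_affine_measurable[of \<sigma> 0, OF c] unfolding T .
  have "(\<integral>\<^sup>+x. F x \<partial>lebesgue) = (\<integral>\<^sup>+x. F x \<partial>(distr lebesgue lebesgue (refl_map \<sigma>)))"
    by (subst leb) (simp add: density_1)
  also have "\<dots> = (\<integral>\<^sup>+x. F (refl_map \<sigma> x) \<partial>lebesgue)"
    by (rule nn_integral_distr[OF Tm]) (use F in simp)
  finally show ?thesis by simp
qed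

definition NN :: "'a::euclidean_space set" where "NN = {x. \<forall>b\<in>Basis. 0 \<le> x \<bullet> b}"
definition PP :: "'a::euclidean_space set" where "PP = {x. \<forall>b\<in>Basis. 0 < x \<bullet> b}"

lemma NN_borel[measurable]: "NN \<in> sets borel"
  unfolding NN_def by measurable
lemma PP_borel[measurable]: "PP \<in> sets borel"
  unfolding PP_def by measurable

lemma ind_refl_lebesgue:
  assumes "A \<in> sets borel"
  shows "(\<lambda>x. indicator A (refl_map \<sigma> x) :: ennreal) \<in> borel_measurable lebesgue"
proof -
  have "(\<lambda>x. indicator A (refl_map \<sigma> x) :: ennreal) \<in> borel_measurable borel"
    using assms by measurable
  then show ?thesis by (intro measurable_completion) simp
qed

lemma orth_decomp_le:
  fixes F :: "'a::euclidean_space \<Rightarrow> ennreal"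
  assumes F[measurable]: "F \<in> borel_measurable lebesgue"
    and sym: "\<And>\<sigma> x. \<sigma> \<in> signs \<Longrightarrow> F (refl_map \<sigma> x) = F x"
  shows "(\<integral>\<^sup>+x. F x \<partial>lebesgue) \<le> of_nat (card (signs :: ('a \<Rightarrow> real) set)) * (\<integral>\<^sup>+x. F x * indicator NN x \<partial>lebesgue)"
proof -
  have fin: "finite (signs :: ('a \<Rightarrow> real) set)" by (intro finite_PiE) auto
  have pt: "F x \<le> (\<Sum>\<sigma>\<in>signs. F x * indicator NN (refl_map \<sigma> x))" for x
  proof -
    define \<sigma>x where "\<sigma>x = (\<lambda>b\<in>Basis. if 0 \<le> x \<bullet> b then 1 else (-1::real))"
    have s: "\<sigma>x \<in> signs" by (auto simp: \<sigma>x_def PiE_def Pi_def)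
    have "refl_map \<sigma>x x \<in> NN" unfolding NN_def by (auto simp: refl_map_inner \<sigma>x_def)
    then have "F x = F x * indicator NN (refl_map \<sigma>x x)" by simp
    also have "\<dots> \<le> (\<Sum>\<sigma>\<in>signs. F x * indicator NN (refl_map \<sigma> x))"
      by (rule member_le_sum[OF s]) (use fin in auto)
    finally show ?thesis .
  qed
  have "(\<integral>\<^sup>+x. F x \<partial>lebesgue) \<le> (\<integral>\<^sup>+x. (\<Sum>\<sigma>\<in>signs. F x * indicator NN (refl_map \<sigma> x)) \<partial>lebesgue)"
    by (intro nn_integral_mono pt)
  also have "\<dots> = (\<Sum>\<sigma>\<in>signs. \<integral>\<^sup>+x. F x * indicator NN (refl_map \<sigma> x) \<partial>lebesgue)"
    by (intro nn_integral_sum borel_measurable_times_ennreal F ind_refl_lebesgue) simp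
  also have "\<dots> = (\<Sum>\<sigma>\<in>(signs :: ('a \<Rightarrow> real) set). \<integral>\<^sup>+x. F x * indicator NN x \<partial>lebesgue)"
  proof (rule sum.cong)
    fix \<sigma> :: "'a \<Rightarrow> real" assume \<sigma>: "\<sigma> \<in> signs"
    have m: "(\<lambda>x. F x * indicator NN x) \<in> borel_measurable lebesgue"
      by (intro borel_measurable_times_ennreal F measurable_completion) measurable
    have "(\<integral>\<^sup>+x. F x * indicator NN (refl_map \<sigma> x) \<partial>lebesgue) = (\<integral>\<^sup>+x. F (refl_map \<sigma> x) * indicator NN (refl_map \<sigma> x) \<partial>lebesgue)"
      using sym[OF \<sigma>] by simp
    also have "\<dots> = (\<integral>\<^sup>+x. F x * indicator NN x \<partial>lebesgue)"
      by (rule reflect_nn_integral[OF \<sigma> m])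
    finally show "(\<integral>\<^sup>+x. F x * indicator NN (refl_map \<sigma> x) \<partial>lebesgue) = (\<integral>\<^sup>+x. F x * indicator NN x \<partial>lebesgue)" .
  qed simp
  also have "\<dots> = of_nat (card (signs :: ('a \<Rightarrow> real) set)) * (\<integral>\<^sup>+x. F x * indicator NN x \<partial>lebesgue)"
    by simp
  finally show ?thesis .
qed

lemma orth_decomp_ge:
  fixes F :: "'a::euclidean_space \<Rightarrow> ennreal"
  assumes F[measurable]: "F \<in> borel_measurable lebesgue"
    and sym: "\<And>\<sigma> x. \<sigma> \<in> signs \<Longrightarrow> F (refl_map \<sigma> x) = F x"
  shows "of_nat (card (signs :: ('a \<Rightarrow> real) set)) * (\<integral>\<^sup>+x. F x * indicator PP x \<partial>lebesgue) \<le> (\<integral>\<^sup>+x. F x \<partial>lebesgue)"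
proof -
  have fin: "finite (signs :: ('a \<Rightarrow> real) set)" by (intro finite_PiE) auto
  have pt: "(\<Sum>\<sigma>\<in>signs. F x * indicator PP (refl_map \<sigma> x)) \<le> F x" for x
  proof (cases "\<exists>\<sigma>0\<in>signs. refl_map \<sigma>0 x \<in> PP")
    case True
    then obtain \<sigma>0 where s0: "\<sigma>0 \<in> signs" "refl_map \<sigma>0 x \<in> PP" by blast
    have uniq: "\<sigma> = \<sigma>0" if "\<sigma> \<in> signs" "refl_map \<sigma> x \<in> PP" for \<sigma>
    proof (rule PiE_ext[OF that(1) s0(1)])
      fix b :: 'a assume b: "b \<in> Basis"
      have "0 < \<sigma> b * (x \<bullet> b)" "0 < \<sigma>0 b * (x \<bullet> b)"
        using that(2) s0(2) b by (auto simp: PP_def refl_map_inner)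
      moreover have "\<sigma> b \<in> {-1, 1}" "\<sigma>0 b \<in> {-1, 1}" using that(1) s0(1) b by (auto simp: PiE_def Pi_def)
      ultimately show "\<sigma> b = \<sigma>0 b" by (auto simp: zero_less_mult_iff)
    qed
    have "(\<Sum>\<sigma>\<in>signs. F x * indicator PP (refl_map \<sigma> x)) = (\<Sum>\<sigma>\<in>signs. if \<sigma> = \<sigma>0 then F x else 0)"
    proof (rule sum.cong[OF refl])
      fix \<sigma> :: "'a \<Rightarrow> real" assume \<sigma>: "\<sigma> \<in> signs"
      show "F x * indicator PP (refl_map \<sigma> x) = (if \<sigma> = \<sigma>0 then F x else 0)"
      proof (cases "\<sigma> = \<sigma>0")
        case True then show ?thesis using s0(2) by simp
      next
        case False
        then have "refl_map \<sigma> x \<notin> PP" using uniq[OF \<sigma>] by blast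
        then show ?thesis using False by simp
      qed
    qed
    also have "\<dots> = F x" using s0 fin by simp
    finally show ?thesis by simp
  next
    case False
    have "(\<Sum>\<sigma>\<in>signs. F x * indicator PP (refl_map \<sigma> x)) = 0"
    proof (rule sum.neutral, rule ballI)
      fix \<sigma> :: "'a \<Rightarrow> real" assume "\<sigma> \<in> signs"
      then have "refl_map \<sigma> x \<notin> PP" using False by blast
      then show "F x * indicator PP (refl_map \<sigma> x) = 0" by simp
    qed
    then show ?thesis by simp
  qed
  have "of_nat (card (signs :: ('a \<Rightarrow> real) set)) * (\<integral>\<^sup>+x. F x * indicator PP x \<partial>lebesgue)
      = (\<Sum>\<sigma>\<in>(signs :: ('a \<Rightarrow> real) set). \<integral>\<^sup>+x. F x * indicator PP x \<partial>lebesgue)" by simp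
  also have "\<dots> = (\<Sum>\<sigma>\<in>signs. \<integral>\<^sup>+x. F x * indicator PP (refl_map \<sigma> x) \<partial>lebesgue)"
  proof (rule sum.cong)
    fix \<sigma> :: "'a \<Rightarrow> real" assume \<sigma>: "\<sigma> \<in> signs"
    have m: "(\<lambda>x. F x * indicator PP x) \<in> borel_measurable lebesgue"
      by (intro borel_measurable_times_ennreal F measurable_completion) measurable
    have "(\<integral>\<^sup>+x. F x * indicator PP (refl_map \<sigma> x) \<partial>lebesgue) = (\<integral>\<^sup>+x. F (refl_map \<sigma> x) * indicator PP (refl_map \<sigma> x) \<partial>lebesgue)"
      using sym[OF \<sigma>] by simp
    also have "\<dots> = (\<integral>\<^sup>+x. F x * indicator PP x \<partial>lebesgue)"
      by (rule reflect_nn_integral[OF \<sigma> m])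
    finally show "(\<integral>\<^sup>+x. F x * indicator PP x \<partial>lebesgue) = (\<integral>\<^sup>+x. F x * indicator PP (refl_map \<sigma> x) \<partial>lebesgue)" by simp
  qed simp
  also have "\<dots> = (\<integral>\<^sup>+x. (\<Sum>\<sigma>\<in>signs. F x * indicator PP (refl_map \<sigma> x)) \<partial>lebesgue)"
    by (intro nn_integral_sum[symmetric] borel_measurable_times_ennreal F ind_refl_lebesgue) simp
  also have "\<dots> \<le> (\<integral>\<^sup>+x. F x \<partial>lebesgue)"
    by (intro nn_integral_mono pt)
  finally show ?thesis .
qed

definition emb :: "('a::euclidean_space \<Rightarrow> real) \<Rightarrow> 'a" where
  "emb y = (\<Sum>b\<in>Basis. y b *\<^sub>R b)"

lemma emb_inner: "b \<in> Basis \<Longrightarrow> emb y \<bullet> b = y b"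
  unfolding emb_def by (simp add: inner_sum_left inner_Basis if_distrib cong: if_cong)

lemma emb_measurable[measurable]: "(emb :: ('a::euclidean_space \<Rightarrow> real) \<Rightarrow> 'a) \<in> PiM Basis (\<lambda>_. lborel) \<rightarrow>\<^sub>M borel"
  unfolding emb_def by measurable

lemma nn_integral_lborel_PiM:
  fixes F :: "'a::euclidean_space \<Rightarrow> ennreal"
  assumes F[measurable]: "F \<in> borel_measurable borel"
  shows "(\<integral>\<^sup>+x. F x \<partial>lborel) = (\<integral>\<^sup>+y. F (emb y) \<partial>PiM Basis (\<lambda>_. lborel))"
proof -
  have "(\<integral>\<^sup>+x. F x \<partial>lborel) = (\<integral>\<^sup>+x. F x \<partial>(distr (PiM Basis (\<lambda>_. lborel)) borel (emb :: ('a \<Rightarrow> real) \<Rightarrow> 'a)))"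
    unfolding emb_def by (rule arg_cong[where f="\<lambda>M. integral\<^sup>N M F", OF lborel_eq])
  also have "\<dots> = (\<integral>\<^sup>+y. F (emb y) \<partial>PiM Basis (\<lambda>_. lborel))"
    by (rule nn_integral_distr) measurable
  finally show ?thesis .
qed

lemma vec_Basis_iff: "(b :: real ^ 'n) \<in> Basis \<longleftrightarrow> (\<exists>j. b = axis j 1)"
  by (auto simp: Basis_vec_def)

lemma nonneg_orthant_NN: "(x :: real ^ 'n) \<in> nonneg_orthant \<longleftrightarrow> x \<in> NN"
proof
  assume "x \<in> nonneg_orthant"
  then show "x \<in> NN" by (auto simp: nonneg_orthant_def NN_def vec_Basis_iff cart_eq_inner_axis)
next
  assume x: "x \<in> NN"
  show "x \<in> nonneg_orthant" unfolding nonneg_orthant_def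
  proof (safe)
    fix j
    have "axis j 1 \<in> (Basis :: (real ^ 'n) set)" unfolding vec_Basis_iff by blast
    then have "0 \<le> x \<bullet> axis j 1" using x by (simp add: NN_def)
    then show "0 \<le> x $ j" by (simp add: cart_eq_inner_axis)
  qed
qed

lemma uncond_refl:
  fixes f :: "real ^ 'n \<Rightarrow> real"
  assumes u: "unconditional f" and \<sigma>: "\<sigma> \<in> signs"
  shows "f (refl_map \<sigma> x) = f x"
proof -
  have ax: "axis j 1 \<in> (Basis :: (real ^ 'n) set)" for j unfolding vec_Basis_iff by blast
  have eq: "refl_map \<sigma> x = (\<chi> j. \<sigma> (axis j 1) * x $ j)"
  proof (subst vec_eq_iff, rule allI)
    fix j
    have "refl_map \<sigma> x $ j = refl_map \<sigma> x \<bullet> axis j 1" by (rule cart_eq_inner_axis)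
    also have "\<dots> = \<sigma> (axis j 1) * (x \<bullet> axis j 1)" by (rule refl_map_inner[OF ax])
    also have "\<dots> = \<sigma> (axis j 1) * x $ j" by (simp add: cart_eq_inner_axis)
    finally show "refl_map \<sigma> x $ j = (\<chi> j. \<sigma> (axis j 1) * x $ j) $ j" by simp
  qed
  have "\<forall>j. \<sigma> (axis j 1) \<in> {-1, 1}" using \<sigma> ax by (auto simp: PiE_def Pi_def)
  moreover have A: "\<forall>\<epsilon> x. (\<forall>j. \<epsilon> j \<in> {-1, 1}) \<longrightarrow> f (\<chi> j. \<epsilon> j * x $ j) = f x"
    using u unfolding unconditional_def .
  ultimately show ?thesis unfolding eq using A[rule_format, of "\<lambda>j. \<sigma> (axis j 1)" x] by simp
qed

lemma norm_refl:
  fixes x :: "'a::euclidean_space"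
  assumes \<sigma>: "\<sigma> \<in> signs"
  shows "norm (refl_map \<sigma> x) = norm x"
proof -
  have n2: "(norm z)\<^sup>2 = (\<Sum>b\<in>Basis. (z \<bullet> b) * (z \<bullet> b))" for z :: 'a
    by (simp only: power2_norm_eq_inner) (rule euclidean_inner)
  have "(norm (refl_map \<sigma> x))\<^sup>2 = (\<Sum>b\<in>Basis. (refl_map \<sigma> x \<bullet> b) * (refl_map \<sigma> x \<bullet> b))"
    by (rule n2)
  also have "\<dots> = (\<Sum>b\<in>Basis. (x \<bullet> b) * (x \<bullet> b))"
  proof (rule sum.cong[OF refl])
    fix b :: 'a assume b: "b \<in> Basis"
    have "\<sigma> b \<in> {-1, 1}" using \<sigma> b by (auto simp: PiE_def Pi_def)
    then show "(refl_map \<sigma> x \<bullet> b) * (refl_map \<sigma> x \<bullet> b) = (x \<bullet> b) * (x \<bullet> b)"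
      using b by (auto simp: refl_map_inner)
  qed
  also have "\<dots> = (norm x)\<^sup>2" by (rule n2[symmetric])
  finally show ?thesis by (simp add: power2_eq_iff_nonneg)
qed

lemma borel_below:
  fixes F :: "'a::euclidean_space \<Rightarrow> ennreal"
  assumes F: "F \<in> borel_measurable lebesgue"
  shows "\<exists>g. g \<in> borel_measurable borel \<and> (\<forall>x. g x \<le> F x) \<and> (\<integral>\<^sup>+x. g x \<partial>lborel) = (\<integral>\<^sup>+x. F x \<partial>lebesgue)"
proof -
  obtain g' where g'[measurable]: "g' \<in> borel_measurable lborel" and ae: "AE x in lborel. F x = g' x"
    using completion_ex_borel_measurable[OF F] by blast
  obtain N where N2: "{x \<in> space lborel. \<not> F x = g' x} \<subseteq> N" and N0: "emeasure lborel N = 0"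
      and N3: "N \<in> sets lborel"
    using ae by (rule AE_E)
  have N1: "N \<in> null_sets lborel" using N0 N3 by (simp add: null_sets_def)
  note N = N1 N2
  have Nb[measurable]: "N \<in> sets borel" using N(1) by auto
  define g where "g x = (if x \<in> N then 0 else g' x)" for x
  have gm: "g \<in> borel_measurable borel" unfolding g_def by measurable
  have le: "g x \<le> F x" for x
  proof (cases "x \<in> N")
    case False
    then have "F x = g' x" using N(2) by auto
    then show ?thesis using False by (simp add: g_def)
  qed (simp add: g_def)
  have "(\<integral>\<^sup>+x. g x \<partial>lborel) = (\<integral>\<^sup>+x. g' x \<partial>lborel)"
    by (intro nn_integral_cong_AE) (use AE_not_in[OF N(1)] in \<open>eventually_elim, simp add: g_def\<close>)
  also have "\<dots> = (\<integral>\<^sup>+x. F x \<partial>lborel)"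
    by (intro nn_integral_cong_AE) (use ae in \<open>eventually_elim, simp\<close>)
  also have "\<dots> = (\<integral>\<^sup>+x. F x \<partial>lebesgue)" by (simp add: nn_integral_completion)
  finally show ?thesis using gm le by blast
qed

lemma nnind_emb:
  fixes y :: "'a::euclidean_space \<Rightarrow> real"
  shows "nnind Basis y = (if \<forall>b\<in>Basis. 0 \<le> y b then 1 else 0)"
proof (cases "\<forall>b\<in>Basis. 0 \<le> y b")
  case True
  then show ?thesis unfolding nnind_def by (simp add: indicator_def)
next
  case False
  then obtain b where b: "b \<in> Basis" "y b < 0" by (auto simp: not_le)
  then have "indicator {0..} (y b) = (0::ennreal)" by (simp add: indicator_def)
  then have "(\<Prod>j\<in>Basis. indicator {0..} (y j) :: ennreal) = 0" using b(1) by (intro prod_zero) auto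
  then show ?thesis using False unfolding nnind_def by simp
qed

lemma pind_emb:
  "pind Basis y = indicator PP (emb y :: 'a::euclidean_space)"
proof (cases "\<forall>b\<in>(Basis :: 'a set). 0 < y b")
  case True
  then have "emb y \<in> (PP :: 'a set)" by (simp add: PP_def emb_inner)
  then show ?thesis using True unfolding pind_def by (simp add: indicator_def)
next
  case False
  then obtain b :: 'a where b: "b \<in> Basis" "\<not> 0 < y b" by auto
  then have "emb y \<notin> (PP :: 'a set)" by (auto simp: PP_def emb_inner)
  moreover have "indicator {0<..} (y b) = (0::ennreal)" using b by (simp add: indicator_def)
  then have "(\<Prod>j\<in>(Basis :: 'a set). indicator {0<..} (y j) :: ennreal) = 0" using b(1) by (intro prod_zero) auto
  ultimately show ?thesis unfolding pind_def by simp
qed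

lemma norm2_sum: "(norm z)\<^sup>2 = (\<Sum>b\<in>Basis. (z \<bullet> b) * (z \<bullet> b))" for z :: "'a::euclidean_space"
  by (simp only: power2_norm_eq_inner) (rule euclidean_inner)

lemma pair_sum_lower:
  fixes x :: "nat \<Rightarrow> real ^ 'n \<Rightarrow> real"
  assumes k: "k \<ge> 2" and pos: "\<And>i b. i < k \<Longrightarrow> b \<in> Basis \<Longrightarrow> 0 < x i b"
  shows "real k * (real k - 1) / 2 * (norm (emb (\<lambda>b\<in>Basis. root k (\<Prod>i<k. x i b)) :: real ^ 'n))\<^sup>2
      \<le> pair_inner_sum k (\<lambda>i. emb (x i) :: real ^ 'n)"
proof -
  define c where "c = real k * (real k - 1) / 2"
  define X where "X i = (emb (x i) :: real ^ 'n)" for i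
  have inner_eq: "X i \<bullet> X j = (\<Sum>b\<in>Basis. x i b * x j b)" for i j
  proof -
    have "X i \<bullet> X j = (\<Sum>b\<in>Basis. (X i \<bullet> b) * (X j \<bullet> b))" by (rule euclidean_inner)
    also have "\<dots> = (\<Sum>b\<in>Basis. x i b * x j b)" by (rule sum.cong) (simp_all add: X_def emb_inner)
    finally show ?thesis .
  qed
  have "pair_inner_sum k X = (\<Sum>j<k. \<Sum>i<j. \<Sum>b\<in>Basis. x i b * x j b)"
    unfolding pair_inner_sum_def by (simp add: inner_eq)
  also have "\<dots> = (\<Sum>j<k. \<Sum>b\<in>Basis. \<Sum>i<j. x i b * x j b)"
    by (rule sum.cong[OF refl]) (rule sum.swap)
  also have "\<dots> = (\<Sum>b\<in>Basis. \<Sum>j<k. \<Sum>i<j. x i b * x j b)"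
    by (rule sum.swap)
  finally have pe: "pair_inner_sum k X = (\<Sum>b\<in>(Basis :: (real ^ 'n) set). \<Sum>j<k. \<Sum>i<j. x i b * x j b)" .
  have "(norm (emb (\<lambda>b\<in>Basis. root k (\<Prod>i<k. x i b)) :: real ^ 'n))\<^sup>2
      = (\<Sum>b\<in>(Basis :: (real ^ 'n) set). root k (\<Prod>i<k. x i b) * root k (\<Prod>i<k. x i b))"
    unfolding norm2_sum by (rule sum.cong) (simp_all add: emb_inner)
  then have "c * (norm (emb (\<lambda>b\<in>Basis. root k (\<Prod>i<k. x i b)) :: real ^ 'n))\<^sup>2
      = (\<Sum>b\<in>(Basis :: (real ^ 'n) set). c * (root k (\<Prod>i<k. x i b))\<^sup>2)"
    by (simp add: sum_distrib_left power2_eq_square)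
  also have "\<dots> \<le> (\<Sum>b\<in>(Basis :: (real ^ 'n) set). \<Sum>j<k. \<Sum>i<j. x i b * x j b)"
  proof (rule sum_mono)
    fix b :: "real ^ 'n" assume b: "b \<in> Basis"
    show "c * (root k (\<Prod>i<k. x i b))\<^sup>2 \<le> (\<Sum>j<k. \<Sum>i<j. x i b * x j b)"
      unfolding c_def by (rule pair_amgm[OF k]) (use pos b in auto)
  qed
  also have "\<dots> = pair_inner_sum k X" by (rule pe[symmetric])
  finally show ?thesis unfolding c_def X_def[abs_def] .
qed

lemma main_part1:
  fixes k :: nat and f :: "nat \<Rightarrow> real ^ 'n \<Rightarrow> real" and \<rho> :: "real \<Rightarrow> real"
  assumes k: "k \<ge> 2"
    and nonneg: "\<And>i x. i < k \<Longrightarrow> 0 \<le> f i x"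
    and meas: "\<And>i. i < k \<Longrightarrow> f i \<in> borel_measurable lebesgue"
    and uncond: "\<And>i. i < k \<Longrightarrow> unconditional (f i)"
    and rpos: "\<forall>t. 0 \<le> t \<longrightarrow> 0 < \<rho> t"
    and rmono: "\<forall>s t. 0 \<le> s \<and> s \<le> t \<longrightarrow> \<rho> t \<le> \<rho> s"
    and hyp: "\<forall>x :: nat \<Rightarrow> real ^ 'n. (\<forall>i<k. x i \<in> nonneg_orthant) \<longrightarrow>
            (\<Prod>i<k. f i (x i)) \<le> \<rho> (pair_inner_sum k x)"
  shows "(\<Prod>i<k. \<integral>\<^sup>+ y. ennreal (f i y) \<partial>lebesgue)
          \<le> (\<integral>\<^sup>+ (u :: real ^ 'n). ennreal (\<rho> (real k * (real k - 1) / 2 * (norm u)\<^sup>2) powr (1 / real k))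
                \<partial>lebesgue) ^ k"
proof -
  have k1: "k \<ge> 1" using k by simp
  define c where "c = real k * (real k - 1) / 2"
  have cpos: "c > 0" using k by (simp add: c_def)
  define h where "h u = ennreal (\<rho> (c * (norm u)\<^sup>2) powr (1 / real k))" for u :: "real ^ 'n"
  define \<rho>' where "\<rho>' t = - \<rho> (max 0 t)" for t
  have "mono \<rho>'" unfolding mono_def \<rho>'_def using rmono by (auto simp: max_def)
  then have [measurable]: "\<rho>' \<in> borel_measurable borel" by (rule borel_measurable_mono)
  have \<rho>eq: "\<rho> (c * (norm u)\<^sup>2) = - \<rho>' (c * (norm u)\<^sup>2)" for u :: "real ^ 'n"
    using cpos by (simp add: \<rho>'_def max_def)
  have hm[measurable]: "h \<in> borel_measurable borel"
    unfolding h_def \<rho>eq by measurable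
  have hleb: "h \<in> borel_measurable lebesgue" by (intro measurable_completion) simp
  have hsym: "h (refl_map \<sigma> x) = h x" if "\<sigma> \<in> signs" for \<sigma> x
    using norm_refl[OF that] by (simp add: h_def)
  define K where "K = (of_nat (card (signs :: (real ^ 'n \<Rightarrow> real) set)) :: ennreal)"
  define F where "F i x = ennreal (f i x) * indicator NN x" for i x
  have indleb: "(\<lambda>x. indicator NN x :: ennreal) \<in> borel_measurable (lebesgue :: (real ^ 'n) measure)"
    by (intro measurable_completion) measurable
  have Fm: "F i \<in> borel_measurable lebesgue" if i: "i < k" for i
    unfolding F_def using meas[OF i] indleb by measurable
  have stepA: "(\<integral>\<^sup>+ y. ennreal (f i y) \<partial>lebesgue) \<le> K * (\<integral>\<^sup>+ x. F i x \<partial>lebesgue)" if i: "i < k" for i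
    unfolding K_def F_def
  proof (rule orth_decomp_le)
    show "(\<lambda>x. ennreal (f i x)) \<in> borel_measurable lebesgue" using meas[OF i] by measurable
    show "ennreal (f i (refl_map \<sigma> x)) = ennreal (f i x)" if "\<sigma> \<in> signs" for \<sigma> x
      using uncond_refl[OF uncond[OF i] that] by simp
  qed
  have "\<forall>i. \<exists>g. i < k \<longrightarrow> (g \<in> borel_measurable borel \<and> (\<forall>x. g x \<le> F i x) \<and> (\<integral>\<^sup>+x. g x \<partial>lborel) = (\<integral>\<^sup>+x. F i x \<partial>lebesgue))"
    using borel_below[OF Fm] by blast
  then obtain g where g: "\<And>i. i < k \<Longrightarrow> g i \<in> borel_measurable borel \<and> (\<forall>x. g i x \<le> F i x) \<and> (\<integral>\<^sup>+x. g i x \<partial>lborel) = (\<integral>\<^sup>+x. F i x \<partial>lebesgue)"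
    by metis
  have gm: "g i \<in> borel_measurable borel" if "i < k" for i using g[OF that] by blast
  have stepC: "(\<integral>\<^sup>+x. F i x \<partial>lebesgue) = (\<integral>\<^sup>+y. g i (emb y) * nnind Basis y \<partial>PiM Basis (\<lambda>_. lborel))"
    if i: "i < k" for i
  proof -
    have "(\<integral>\<^sup>+x. F i x \<partial>lebesgue) = (\<integral>\<^sup>+x. g i x \<partial>lborel)" using g[OF i] by simp
    also have "\<dots> = (\<integral>\<^sup>+y. g i (emb y) \<partial>PiM Basis (\<lambda>_. lborel))"
      by (rule nn_integral_lborel_PiM[OF gm[OF i]])
    also have "\<dots> = (\<integral>\<^sup>+y. g i (emb y) * nnind Basis y \<partial>PiM Basis (\<lambda>_. lborel))"
    proof (rule nn_integral_cong)
      fix y :: "real ^ 'n \<Rightarrow> real"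
      show "g i (emb y) = g i (emb y) * nnind Basis y"
      proof (cases "\<forall>b\<in>Basis. 0 \<le> y b")
        case True then show ?thesis by (simp add: nnind_emb)
      next
        case False
        then have "emb y \<notin> (NN :: (real ^ 'n) set)" by (auto simp: NN_def emb_inner)
        then have "F i (emb y) = 0" by (simp add: F_def)
        then have "g i (emb y) = 0" using g[OF i] by (metis le_zero_eq)
        then show ?thesis by simp
      qed
    qed
    finally show ?thesis .
  qed
  have gPm: "(\<lambda>y. g i (emb y)) \<in> borel_measurable (PiM Basis (\<lambda>_. lborel))" if i: "i < k" for i
    using measurable_comp[OF emb_measurable gm[OF i]] by (simp add: comp_def)
  have hPm: "(\<lambda>y. h (emb y)) \<in> borel_measurable (PiM Basis (\<lambda>_. lborel))"
    using measurable_comp[OF emb_measurable hm] by (simp add: comp_def)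
  have stepD: "(\<Prod>i<k. \<integral>\<^sup>+y. g i (emb y) * nnind Basis y \<partial>PiM Basis (\<lambda>_. lborel))
      \<le> (\<integral>\<^sup>+y. h (emb y) * pind Basis y \<partial>PiM Basis (\<lambda>_. lborel)) ^ k"
  proof (rule pl_PiM[OF finite_Basis k1, where g = "\<lambda>i y. g i (emb y)" and h = "\<lambda>y. h (emb y)"])
    show "\<And>i. i < k \<Longrightarrow> (\<lambda>y. g i (emb y)) \<in> borel_measurable (PiM Basis (\<lambda>_. lborel))" by (rule gPm)
    show "(\<lambda>y. h (emb y)) \<in> borel_measurable (PiM Basis (\<lambda>_. lborel))" by (rule hPm)
    fix x :: "nat \<Rightarrow> real ^ 'n \<Rightarrow> real"
    assume xx: "\<And>i. i < k \<Longrightarrow> x i \<in> space (PiM Basis (\<lambda>_. lborel)) \<and> (\<forall>j\<in>Basis. 0 < x i j)"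
    define X where "X i = (emb (x i) :: real ^ 'n)" for i
    define geo where "geo = (\<lambda>j\<in>(Basis :: (real ^ 'n) set). root k (\<Prod>i<k. x i j))"
    have XNN: "X i \<in> NN" if i: "i < k" for i
      using xx[OF i] by (auto simp: X_def NN_def emb_inner less_imp_le)
    have "(\<Prod>i<k. g i (X i)) \<le> (\<Prod>i<k. F i (X i))"
      using g by (intro prod_mono_ennreal) auto
    also have "\<dots> = (\<Prod>i<k. ennreal (f i (X i)))"
      using XNN by (intro prod.cong) (auto simp: F_def)
    also have "\<dots> = ennreal (\<Prod>i<k. f i (X i))"
      using nonneg by (intro prod_ennreal) auto
    also have "\<dots> \<le> ennreal (\<rho> (pair_inner_sum k X))"
    proof (rule ennreal_leI)
      have "\<forall>i<k. X i \<in> nonneg_orthant" using XNN by (simp add: nonneg_orthant_NN)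
      then show "(\<Prod>i<k. f i (X i)) \<le> \<rho> (pair_inner_sum k X)" using hyp by blast
    qed
    also have "\<dots> \<le> ennreal (\<rho> (c * (norm (emb geo :: real ^ 'n))\<^sup>2))"
    proof (rule ennreal_leI)
      have low: "c * (norm (emb geo :: real ^ 'n))\<^sup>2 \<le> pair_inner_sum k X"
        unfolding c_def geo_def X_def[abs_def] by (rule pair_sum_lower[OF k]) (use xx in auto)
      have "0 \<le> c * (norm (emb geo :: real ^ 'n))\<^sup>2" using cpos by simp
      then show "\<rho> (pair_inner_sum k X) \<le> \<rho> (c * (norm (emb geo :: real ^ 'n))\<^sup>2)"
        using rmono low by blast
    qed
    also have "\<dots> = h (emb geo) ^ k"
    proof -
      define r where "r = \<rho> (c * (norm (emb geo :: real ^ 'n))\<^sup>2)"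
      have rpos': "r > 0" unfolding r_def using rpos cpos by simp
      have "(r powr (1 / real k)) ^ k = r powr (real k * (1 / real k))"
        by (rule powr_power) (use rpos' in simp)
      also have "\<dots> = r" using k rpos' by simp
      finally have e: "(r powr (1 / real k)) ^ k = r" .
      have "h (emb geo) ^ k = ennreal (r powr (1 / real k)) ^ k" by (simp add: h_def r_def)
      also have "\<dots> = ennreal ((r powr (1 / real k)) ^ k)" by (rule ennreal_power) simp
      also have "\<dots> = ennreal r" by (simp only: e)
      finally show ?thesis by (simp add: r_def)
    qed
    finally show "(\<Prod>i<k. g i (emb (x i))) \<le> h (emb (\<lambda>j\<in>Basis. root k (\<Prod>i<k. x i j))) ^ k"
      by (simp add: X_def geo_def)
  qed
  have stepE: "(\<integral>\<^sup>+y. h (emb y) * pind Basis y \<partial>PiM Basis (\<lambda>_. lborel)) = (\<integral>\<^sup>+x. h x * indicator PP x \<partial>lebesgue)"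
  proof -
    have "(\<integral>\<^sup>+y. h (emb y) * pind Basis y \<partial>PiM Basis (\<lambda>_. lborel))
        = (\<integral>\<^sup>+y. h (emb y) * indicator PP (emb y :: real ^ 'n) \<partial>PiM Basis (\<lambda>_. lborel))"
      by (simp add: pind_emb)
    also have "\<dots> = (\<integral>\<^sup>+x. h x * indicator PP x \<partial>lborel)"
      by (rule nn_integral_lborel_PiM[symmetric]) measurable
    also have "\<dots> = (\<integral>\<^sup>+x. h x * indicator PP x \<partial>lebesgue)" by (simp add: nn_integral_completion)
    finally show ?thesis .
  qed
  have stepE2: "K * (\<integral>\<^sup>+x. h x * indicator PP x \<partial>lebesgue) \<le> (\<integral>\<^sup>+x. h x \<partial>lebesgue)"
    unfolding K_def by (rule orth_decomp_ge[OF hleb hsym])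
  have "(\<Prod>i<k. \<integral>\<^sup>+ y. ennreal (f i y) \<partial>lebesgue) \<le> (\<Prod>i<k. K * (\<integral>\<^sup>+ x. F i x \<partial>lebesgue))"
    using stepA by (intro prod_mono_ennreal) auto
  also have "\<dots> = (\<Prod>i<k. K * (\<integral>\<^sup>+y. g i (emb y) * nnind Basis y \<partial>PiM Basis (\<lambda>_. lborel)))"
    using stepC by (intro prod.cong) auto
  also have "\<dots> = K ^ k * (\<Prod>i<k. \<integral>\<^sup>+y. g i (emb y) * nnind Basis y \<partial>PiM Basis (\<lambda>_. lborel))"
    by (simp add: prod.distrib)
  also have "\<dots> \<le> K ^ k * (\<integral>\<^sup>+y. h (emb y) * pind Basis y \<partial>PiM Basis (\<lambda>_. lborel)) ^ k"
    by (intro mult_left_mono stepD) simp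
  also have "\<dots> = (K * (\<integral>\<^sup>+x. h x * indicator PP x \<partial>lebesgue)) ^ k"
    by (simp add: stepE power_mult_distrib)
  also have "\<dots> \<le> (\<integral>\<^sup>+x. h x \<partial>lebesgue) ^ k"
    by (intro power_mono stepE2) simp
  finally show ?thesis by (simp add: h_def c_def)
qed

theorem mainTheorem3:
  fixes k :: nat and f :: "nat \<Rightarrow> real ^ 'n \<Rightarrow> real"
  assumes k: "k \<ge> 2"
    and nonneg: "\<And>i x. i < k \<Longrightarrow> 0 \<le> f i x"
    and meas: "\<And>i. i < k \<Longrightarrow> f i \<in> borel_measurable lebesgue"
    and uncond: "\<And>i. i < k \<Longrightarrow> unconditional (f i)"
    and integr: "\<And>i. i < k \<Longrightarrow> integrable lebesgue (f i)"
  shows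
    "(\<forall>\<rho> :: real \<Rightarrow> real.
        (\<forall>t. 0 \<le> t \<longrightarrow> 0 < \<rho> t) \<and>
        (\<forall>s t. 0 \<le> s \<and> s \<le> t \<longrightarrow> \<rho> t \<le> \<rho> s) \<and>
        (\<integral>\<^sup>+ t. ennreal (\<rho> (t\<^sup>2) powr (1 / real k)) \<partial>lborel) < \<infinity> \<and>
        (\<forall>x :: nat \<Rightarrow> real ^ 'n. (\<forall>i<k. x i \<in> nonneg_orthant) \<longrightarrow>
            (\<Prod>i<k. f i (x i)) \<le> \<rho> (pair_inner_sum k x))
      \<longrightarrow>
        (\<Prod>i<k. \<integral>\<^sup>+ y. ennreal (f i y) \<partial>lebesgue)
          \<le> (\<integral>\<^sup>+ (u :: real ^ 'n). ennreal (\<rho> (real k * (real k - 1) / 2 * (norm u)\<^sup>2) powr (1 / real k))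
                \<partial>lebesgue) ^ k)
     \<and>
     (\<forall>\<alpha> :: real. 0 \<le> \<alpha> \<and>
        (\<forall>x :: nat \<Rightarrow> real ^ 'n. (\<forall>i<k. x i \<in> nonneg_orthant) \<longrightarrow>
            (\<Prod>i<k. f i (x i)) \<le> exp (- \<alpha> * pair_inner_sum k x))
      \<longrightarrow>
        (\<Prod>i<k. \<integral>\<^sup>+ y. ennreal (f i y) \<partial>lebesgue)
          \<le> (\<integral>\<^sup>+ (u :: real ^ 'n). ennreal (exp (- \<alpha> * ((real k - 1) / 2) * (norm u)\<^sup>2)) \<partial>lebesgue) ^ k)"
proof (intro conjI allI impI)
  fix \<rho> :: "real \<Rightarrow> real"
  assume H: "(\<forall>t. 0 \<le> t \<longrightarrow> 0 < \<rho> t) \<and>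
        (\<forall>s t. 0 \<le> s \<and> s \<le> t \<longrightarrow> \<rho> t \<le> \<rho> s) \<and>
        (\<integral>\<^sup>+ t. ennreal (\<rho> (t\<^sup>2) powr (1 / real k)) \<partial>lborel) < \<infinity> \<and>
        (\<forall>x :: nat \<Rightarrow> real ^ 'n. (\<forall>i<k. x i \<in> nonneg_orthant) \<longrightarrow>
            (\<Prod>i<k. f i (x i)) \<le> \<rho> (pair_inner_sum k x))"
  then have rp: "\<forall>t. 0 \<le> t \<longrightarrow> 0 < \<rho> t" and rm: "\<forall>s t. 0 \<le> s \<and> s \<le> t \<longrightarrow> \<rho> t \<le> \<rho> s"
    and hy: "\<forall>x :: nat \<Rightarrow> real ^ 'n. (\<forall>i<k. x i \<in> nonneg_orthant) \<longrightarrow>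
            (\<Prod>i<k. f i (x i)) \<le> \<rho> (pair_inner_sum k x)"
    by blast+
  show "(\<Prod>i<k. \<integral>\<^sup>+ y. ennreal (f i y) \<partial>lebesgue)
          \<le> (\<integral>\<^sup>+ (u :: real ^ 'n). ennreal (\<rho> (real k * (real k - 1) / 2 * (norm u)\<^sup>2) powr (1 / real k))
                \<partial>lebesgue) ^ k"
    by (rule main_part1[OF k nonneg meas uncond rp rm hy])
next
  fix \<alpha> :: real
  assume H: "0 \<le> \<alpha> \<and>
        (\<forall>x :: nat \<Rightarrow> real ^ 'n. (\<forall>i<k. x i \<in> nonneg_orthant) \<longrightarrow>
            (\<Prod>i<k. f i (x i)) \<le> exp (- \<alpha> * pair_inner_sum k x))"
  show "(\<Prod>i<k. \<integral>\<^sup>+ y. ennreal (f i y) \<partial>lebesgue)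
          \<le> (\<integral>\<^sup>+ (u :: real ^ 'n). ennreal (exp (- \<alpha> * ((real k - 1) / 2) * (norm u)\<^sup>2)) \<partial>lebesgue) ^ k"
  proof (cases "\<alpha> = 0")
    case True
    have "(\<integral>\<^sup>+ (u :: real ^ 'n). ennreal (exp (- \<alpha> * ((real k - 1) / 2) * (norm u)\<^sup>2)) \<partial>lebesgue)
        = (\<integral>\<^sup>+ (u :: real ^ 'n). 1 \<partial>lborel)"
      using True by (simp add: nn_integral_completion)
    also have "\<dots> = top" by simp
    finally have "(\<integral>\<^sup>+ (u :: real ^ 'n). ennreal (exp (- \<alpha> * ((real k - 1) / 2) * (norm u)\<^sup>2)) \<partial>lebesgue) ^ k = top"
      using k by (simp add: power_eq_top_ennreal)
    then show ?thesis by simp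
  next
    case False
    then have apos: "\<alpha> > 0" using H by simp
    define \<rho> where "\<rho> t = exp (- \<alpha> * t)" for t
    have rp: "\<forall>t. 0 \<le> t \<longrightarrow> 0 < \<rho> t" by (simp add: \<rho>_def)
    have rm: "\<forall>s t. 0 \<le> s \<and> s \<le> t \<longrightarrow> \<rho> t \<le> \<rho> s" using apos by (simp add: \<rho>_def)
    have hy: "\<forall>x :: nat \<Rightarrow> real ^ 'n. (\<forall>i<k. x i \<in> nonneg_orthant) \<longrightarrow>
            (\<Prod>i<k. f i (x i)) \<le> \<rho> (pair_inner_sum k x)"
      using H by (simp add: \<rho>_def)
    have "(\<Prod>i<k. \<integral>\<^sup>+ y. ennreal (f i y) \<partial>lebesgue)
          \<le> (\<integral>\<^sup>+ (u :: real ^ 'n). ennreal (\<rho> (real k * (real k - 1) / 2 * (norm u)\<^sup>2) powr (1 / real k))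
                \<partial>lebesgue) ^ k"
      by (rule main_part1[OF k nonneg meas uncond rp rm hy])
    also have "(\<integral>\<^sup>+ (u :: real ^ 'n). ennreal (\<rho> (real k * (real k - 1) / 2 * (norm u)\<^sup>2) powr (1 / real k))
                \<partial>lebesgue) = (\<integral>\<^sup>+ (u :: real ^ 'n). ennreal (exp (- \<alpha> * ((real k - 1) / 2) * (norm u)\<^sup>2)) \<partial>lebesgue)"
    proof (rule nn_integral_cong)
      fix u :: "real ^ 'n"
      have "\<rho> (real k * (real k - 1) / 2 * (norm u)\<^sup>2) powr (1 / real k)
          = exp ((1 / real k) * (- \<alpha> * (real k * (real k - 1) / 2 * (norm u)\<^sup>2)))"
        by (simp add: \<rho>_def powr_def)
      also have "(1 / real k) * (- \<alpha> * (real k * (real k - 1) / 2 * (norm u)\<^sup>2)) = - \<alpha> * ((real k - 1) / 2) * (norm u)\<^sup>2"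
        using k by (simp add: field_simps)
      finally show "ennreal (\<rho> (real k * (real k - 1) / 2 * (norm u)\<^sup>2) powr (1 / real k))
          = ennreal (exp (- \<alpha> * ((real k - 1) / 2) * (norm u)\<^sup>2))" by simp
    qed
    finally show ?thesis .
  qed
qed

end
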